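(* Let $\mathbb{P}=\{(x,y)\in\mathbb{R}^2: x^2+y^2<1\}$ be the Poincaré disc model of the hyperbolic plane, with distance $d_{\mathbb{P}}(u,v)=\operatorname{arccosh}(1+\mathfrak{p}(u,v))$, where $\mathfrak{p}(u,v)=\frac{2\|u-v\|^2}{(1-\|u\|^2)(1-\|v\|^2)}$ and $\|\cdot\|$ is the Euclidean norm. Let $\lambda>0$, $\varepsilon>0$, and let $Q=Q(\lambda,\varepsilon)$ be the geodesic quadrilateral in $\mathbb{P}$ with vertices $(\pm a,\pm b)$ ($a,b>0$), where $a,b$ are chosen so that the hyperbolic distance between the midpoint of the upper side $U$ (from $(a,b)$ to $(-a,b)$) and the midpoint of the lower side $L$ (from $(a,-b)$ to $(-a,-b)$) is $\lambda$, and the hyperbolic distance between the midpoints of the other two sides (the left side and the right side) is $\varepsilon$. Then: (i) the unique shortest path in $Q$ from $L$ to $U$ is a segment of the $y$-axis; (ii) there exists $\alpha=\alpha(\lambda,\varepsilon)>0$ such that every path in $Q$ from $L$ to $U$ which meets either the left side or the right side of $Q$ has length at least $\lambda+\alpha$.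
   Context: In the Poincaré disc model the geodesics are the circular arcs (and diameters) orthogonal to the unit circle; a geodesic quadrilateral is the region bounded by four such geodesic segments. *)

theory Defs
  imports "HOL-Analysis.Analysis"
begin

text \<open>The plane R^2 is modelled by the type complex; (x,y) is Complex x y.\<close>

definition pdisc :: "complex set" where
  "pdisc = {z. cmod z < 1}"

definition pp :: "complex \<Rightarrow> complex \<Rightarrow> real" where
  "pp u v = 2 * (cmod (u - v))\<^sup>2 / ((1 - (cmod u)\<^sup>2) * (1 - (cmod v)\<^sup>2))"

definition pdist :: "complex \<Rightarrow> complex \<Rightarrow> real" where
  "pdist u v = arcosh (1 + pp u v)"

definition geoseg :: "complex \<Rightarrow> complex \<Rightarrow> complex set" where
  "geoseg u v = {z. \<exists>g. g 0 = u \<and> g 1 = v \<and> g ` {0..1} \<subseteq> pdisc \<and>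
      (\<forall>s\<in>{0..1}. \<forall>t\<in>{0..1}. pdist (g s) (g t) = \<bar>s - t\<bar> * pdist u v) \<and>
      z \<in> g ` {0..1}}"

definition hmid :: "complex \<Rightarrow> complex \<Rightarrow> complex" where
  "hmid u v = (THE m. m \<in> pdisc \<and> pdist u m = pdist u v / 2 \<and> pdist m v = pdist u v / 2)"

definition hlength :: "(real \<Rightarrow> complex) \<Rightarrow> ereal" where
  "hlength g = (SUP ts \<in> {ts. sorted ts \<and> set ts \<subseteq> {0..1}}.
      ereal (sum_list (map2 (\<lambda>s t. pdist (g s) (g t)) ts (tl ts))))"

definition upper_side :: "real \<Rightarrow> real \<Rightarrow> complex set" where
  "upper_side a b = geoseg (Complex a b) (Complex (-a) b)"
definition lower_side :: "real \<Rightarrow> real \<Rightarrow> complex set" where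
  "lower_side a b = geoseg (Complex a (-b)) (Complex (-a) (-b))"
definition right_side :: "real \<Rightarrow> real \<Rightarrow> complex set" where
  "right_side a b = geoseg (Complex a (-b)) (Complex a b)"
definition left_side :: "real \<Rightarrow> real \<Rightarrow> complex set" where
  "left_side a b = geoseg (Complex (-a) (-b)) (Complex (-a) b)"

definition quad_boundary :: "real \<Rightarrow> real \<Rightarrow> complex set" where
  "quad_boundary a b = upper_side a b \<union> lower_side a b \<union> left_side a b \<union> right_side a b"

definition quad :: "real \<Rightarrow> real \<Rightarrow> complex set" where
  "quad a b = quad_boundary a b \<union> inside (quad_boundary a b)"

definition LU_path :: "real \<Rightarrow> real \<Rightarrow> (real \<Rightarrow> complex) \<Rightarrow> bool" where
  "LU_path a b g \<longleftrightarrow> path g \<and> path_image g \<subseteq> quad a b \<and>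
     pathstart g \<in> lower_side a b \<and> pathfinish g \<in> upper_side a b"

end

theory Submission
  imports Defs
begin


definition mob :: "complex \<Rightarrow> complex \<Rightarrow> complex" where
  "mob w z = (z - w) / (1 - cnj w * z)"

lemma key_id: "(cmod (1 - cnj w * z))^2 - (cmod (z - w))^2 = (1 - (cmod w)^2) * (1 - (cmod z)^2)"
  unfolding cmod_power2 by (simp add: power2_eq_square algebra_simps)

lemma denom_nz: assumes "cmod w < 1" "cmod z \<le> 1" shows "1 - cnj w * z \<noteq> 0"
proof
  assume "1 - cnj w * z = 0"
  hence "cnj w * z = 1" by simp
  hence "cmod w * cmod z = 1" by (metis complex_mod_cnj norm_mult norm_one)
  moreover have "cmod w * cmod z < 1" using assms
    by (metis mult_le_one norm_ge_zero order_le_less_trans less_eq_real_def mult_strict_right_mono mult_less_cancel_right1 not_le)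
  ultimately show False by simp
qed

lemma mob_norm: assumes "cmod w < 1" "cmod z \<le> 1"
  shows "1 - (cmod (mob w z))^2 = (1 - (cmod w)^2) * (1 - (cmod z)^2) / (cmod (1 - cnj w * z))^2"
proof -
  have nz: "cmod (1 - cnj w * z) \<noteq> 0" using denom_nz[OF assms] by simp
  have "(cmod (mob w z))^2 = (cmod (z - w))^2 / (cmod (1 - cnj w * z))^2"
    by (simp add: mob_def norm_divide power_divide)
  thus ?thesis using key_id[of w z] nz by (simp add: field_simps)
qed

lemma mob_diff: assumes "cmod w < 1" "cmod z \<le> 1" "cmod u \<le> 1"
  shows "mob w z - mob w u = (z - u) * (1 - cnj w * w) / ((1 - cnj w * z) * (1 - cnj w * u))"
  using denom_nz[OF assms(1,2)] denom_nz[OF assms(1,3)]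
  by (simp add: mob_def field_simps)



lemma mob_disc: assumes "cmod w < 1" "cmod z < 1" shows "cmod (mob w z) < 1"
proof -
  have nz: "cmod (1 - cnj w * z) \<noteq> 0" using denom_nz[of w z] assms by simp
  have "(cmod w)^2 < 1" "(cmod z)^2 < 1" using assms by (simp_all add: abs_square_less_1)
  hence "1 - (cmod (mob w z))^2 > 0" using mob_norm[of w z] assms nz by simp
  thus ?thesis by (simp add: abs_square_less_1)
qed

lemma mob_inv: assumes "cmod w < 1" "cmod z \<le> 1" shows "mob (-w) (mob w z) = z"
proof -
  have d: "1 - cnj w * z \<noteq> 0" using denom_nz assms by auto
  have e: "1 - cnj w * w \<noteq> 0" using denom_nz[of w w] assms by auto
  have n: "mob w z + w = z * (1 - cnj w * w) / (1 - cnj w * z)"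
    using d by (simp add: mob_def field_simps)
  have m: "1 + cnj w * mob w z = (1 - cnj w * w) / (1 - cnj w * z)"
    using d by (simp add: mob_def field_simps)
  have "mob (-w) (mob w z) = (mob w z + w) / (1 + cnj w * mob w z)" by (simp add: mob_def)
  also have "\<dots> = z" unfolding n m using d e by simp
  finally show ?thesis .
qed

lemma cnjww: "cnj w * w = of_real ((cmod w)^2)"
  by (metis complex_norm_square mult.commute of_real_power)

lemma alg1: fixes k Z U P Q D :: real
  shows "k \<noteq> 0 \<Longrightarrow> Z \<noteq> 0 \<Longrightarrow> U \<noteq> 0 \<Longrightarrow> P \<noteq> 0 \<Longrightarrow> Q \<noteq> 0 \<Longrightarrow>
   2 * (D * k^2 / (P * Q)) / ((k * Z / P) * (k * U / Q)) = 2 * D / (Z * U)"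
  by (simp add: field_simps power2_eq_square)

lemma alg2: fixes A M B C E :: real
  shows "A = 2 * M \<Longrightarrow> B = C * E \<Longrightarrow> C \<noteq> 0 \<Longrightarrow> E \<noteq> 0 \<Longrightarrow> A / (2 * C * E) = M / B"
  by (simp add: field_simps)

lemma pp_mob: assumes "cmod w < 1" "cmod z < 1" "cmod u < 1"
  shows "pp (mob w z) (mob w u) = pp z u"
proof -
  have dz: "cmod (1 - cnj w * z) \<noteq> 0" using denom_nz[of w z] assms by simp
  have du: "cmod (1 - cnj w * u) \<noteq> 0" using denom_nz[of w u] assms by simp
  have w2: "(cmod w)^2 < 1" using assms by (simp add: abs_square_less_1)
  have "cmod (1 - cnj w * w) = 1 - (cmod w)^2" using w2 unfolding cnjww
    by (metis abs_of_nonneg diff_ge_0_iff_ge less_eq_real_def norm_of_real of_real_1 of_real_diff)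
  hence D: "(cmod (mob w z - mob w u))^2 = (cmod (z-u))^2 * (1 - (cmod w)^2)^2 / ((cmod (1 - cnj w * z))^2 * (cmod (1 - cnj w * u))^2)"
    using mob_diff[of w z u] assms by (simp add: norm_divide norm_mult power_divide power_mult_distrib)
  have "(cmod z)^2 < 1" "(cmod u)^2 < 1" using assms by (simp_all add: abs_square_less_1)
  hence z2: "1 - (cmod z)^2 \<noteq> 0" "1 - (cmod u)^2 \<noteq> 0" "1 - (cmod w)^2 \<noteq> 0"
    using w2 by auto
  show ?thesis unfolding pp_def D mob_norm[OF assms(1) less_imp_le[OF assms(2)]] mob_norm[OF assms(1) less_imp_le[OF assms(3)]]
    using dz du z2 by (intro alg1) auto
qed

lemma pp_rot: assumes "cmod r = 1" shows "pp (r * z) (r * u) = pp z u"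
proof -
  have "r * z - r * u = r * (z - u)" by (simp add: algebra_simps)
  thus ?thesis using assms by (simp add: pp_def norm_mult)
qed

lemma pdist_rot: assumes "cmod r = 1" shows "pdist (r * z) (r * u) = pdist z u"
  using pp_rot[OF assms] by (simp add: pdist_def)

lemma pdist_mob: assumes "cmod w < 1" "cmod z < 1" "cmod u < 1"
  shows "pdist (mob w z) (mob w u) = pdist z u"
  using pp_mob[OF assms] by (simp add: pdist_def)

lemma pp_sym: "pp z u = pp u z"
  by (simp add: pp_def norm_minus_commute mult.commute)

lemma pdist_sym: "pdist z u = pdist u z"
  by (simp add: pdist_def pp_sym)

lemma pp_nonneg: assumes "cmod z < 1" "cmod u < 1" shows "pp z u \<ge> 0"
proof -
  have "(cmod z)^2 < 1" "(cmod u)^2 < 1" using assms by (simp_all add: abs_square_less_1)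
  thus ?thesis by (simp add: pp_def)
qed

lemma pdist_nonneg: assumes "cmod z < 1" "cmod u < 1" shows "pdist z u \<ge> 0"
  using pp_nonneg[OF assms] by (simp add: pdist_def)

lemma pp_alt: assumes "cmod z < 1" "cmod u < 1"
  shows "1 + pp z u = ((1 + (cmod z)^2) * (1 + (cmod u)^2) - 4 * (Re z * Re u + Im z * Im u)) / ((1 - (cmod z)^2) * (1 - (cmod u)^2))"
proof -
  have "(cmod z)^2 < 1" "(cmod u)^2 < 1" using assms by (simp_all add: abs_square_less_1)
  hence nz: "(1 - (cmod z)^2) * (1 - (cmod u)^2) \<noteq> 0" by simp
  have D: "(cmod (z - u))^2 = (cmod z)^2 + (cmod u)^2 - 2 * (Re z * Re u + Im z * Im u)"
    unfolding cmod_power2 by (simp add: power2_eq_square algebra_simps)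
  have "1 + pp z u = ((1 - (cmod z)^2) * (1 - (cmod u)^2) + 2 * (cmod (z - u))^2) / ((1 - (cmod z)^2) * (1 - (cmod u)^2))"
    unfolding pp_def using nz by (simp add: field_simps)
  also have "(1 - (cmod z)^2) * (1 - (cmod u)^2) + 2 * (cmod (z - u))^2 = (1 + (cmod z)^2) * (1 + (cmod u)^2) - 4 * (Re z * Re u + Im z * Im u)"
    unfolding D by (simp add: algebra_simps)
  finally show ?thesis .
qed

definition H :: "real \<Rightarrow> real" where "H x = ln ((1 + x) / (1 - x))"

lemma cosh_H: assumes "\<bar>x\<bar> < 1" "\<bar>y\<bar> < 1"
  shows "cosh (H x - H y) = ((1 + x^2) * (1 + y^2) - 4 * x * y) / ((1 - x^2) * (1 - y^2))"
proof -
  have p: "(1+x)/(1-x) > 0" "(1+y)/(1-y) > 0" using assms by auto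
  have "exp (H x - H y) = ((1+x)/(1-x)) / ((1+y)/(1-y))" using p by (simp add: H_def exp_diff)
  moreover have "exp (-(H x - H y)) = ((1+y)/(1-y)) / ((1+x)/(1-x))" using p by (simp add: H_def exp_diff)
  ultimately have "cosh (H x - H y) = (((1+x)/(1-x)) / ((1+y)/(1-y)) + ((1+y)/(1-y)) / ((1+x)/(1-x))) / 2"
    by (simp add: cosh_def)
  also have "\<dots> = (((1+x)*(1-y))^2 + ((1-x)*(1+y))^2) / (2 * ((1-x)*(1+y)) * ((1+x)*(1-y)))"
  proof -
    define P where "P = (1+x)*(1-y)"
    define Q where "Q = (1-x)*(1+y)"
    have PQ: "P > 0" "Q > 0" using assms by (auto simp: P_def Q_def)
    have r1: "((1+x)/(1-x)) / ((1+y)/(1-y)) = P / Q" using assms by (simp add: P_def Q_def field_simps)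
    have r2: "((1+y)/(1-y)) / ((1+x)/(1-x)) = Q / P" using assms by (simp add: P_def Q_def field_simps)
    show ?thesis unfolding r1 r2 P_def[symmetric] Q_def[symmetric] using PQ by (simp add: field_simps power2_eq_square)
  qed
  also have "\<dots> = ((1 + x^2) * (1 + y^2) - 4 * x * y) / ((1 - x^2) * (1 - y^2))"
  proof -
    have a: "1 - x > 0" "1 + x > 0" "1 - y > 0" "1 + y > 0" using assms by auto
    have "(1 - x^2) * (1 - y^2) = ((1-x)*(1+y)) * ((1+x)*(1-y))" by (simp add: algebra_simps power2_eq_square)
    moreover have "((1+x)*(1-y))^2 + ((1-x)*(1+y))^2 = 2 * ((1 + x^2) * (1 + y^2) - 4 * x * y)"
      by (simp add: algebra_simps power2_eq_square)
    ultimately show ?thesis using a by (intro alg2) auto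
  qed
  finally show ?thesis .
qed

lemma arcosh_cosh_abs: "arcosh (cosh (x::real)) = \<bar>x\<bar>"
  by (cases "x \<ge> 0") (simp_all add: arcosh_cosh_real, metis arcosh_cosh_real cosh_minus neg_0_le_iff_le le_cases)

lemma pdist_real: assumes "\<bar>x\<bar> < 1" "\<bar>y\<bar> < 1"
  shows "pdist (of_real x) (of_real y) = \<bar>H x - H y\<bar>"
proof -
  have "1 + pp (of_real x) (of_real y) = cosh (H x - H y)"
    using pp_alt[of "of_real x" "of_real y"] assms cosh_H[OF assms] by (simp add: power2_eq_square)
  thus ?thesis by (simp add: pdist_def arcosh_cosh_abs)
qed



definition T :: "real \<Rightarrow> real" where "T y = (exp y - 1) / (exp y + 1)"

lemma T_bound: "\<bar>T y\<bar> < 1"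
proof -
  have d: "exp y + 1 > 0" by (simp add: add_pos_pos)
  have "T y < 1" using d by (simp add: T_def divide_less_eq)
  moreover have "-1 < T y" using d by (simp add: T_def less_divide_eq)
  ultimately show ?thesis by (simp add: abs_less_iff)
qed

lemma galg: "(e::real) > 0 \<Longrightarrow> (1 + (e - 1) / (e + 1)) / (1 - (e - 1) / (e + 1)) = e"
proof -
  assume "e > 0" hence "e + 1 \<noteq> 0" by simp
  thus ?thesis by (simp add: field_simps)
qed

lemma galg2: "(x::real) < 1 \<Longrightarrow> ((1 + x) / (1 - x) - 1) / ((1 + x) / (1 - x) + 1) = x"
  by (simp add: field_simps)

lemma H_T: "H (T y) = y"
proof -
  have e: "exp y > 0" by simp
  have "(1 + T y) / (1 - T y) = exp y" unfolding T_def using galg[OF e] .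
  thus ?thesis by (simp add: H_def)
qed

lemma T_H: assumes "\<bar>x\<bar> < 1" shows "T (H x) = x"
proof -
  have p: "(1+x)/(1-x) > 0" using assms by auto
  hence "exp (H x) = (1+x)/(1-x)" by (simp add: H_def)
  thus ?thesis unfolding T_def using galg2[of x] assms by simp
qed

lemma H_less_iff: assumes "\<bar>x\<bar> < 1" "\<bar>y\<bar> < 1" shows "H x < H y \<longleftrightarrow> x < y"
proof -
  have p: "(1+x)/(1-x) > 0" "(1+y)/(1-y) > 0" using assms by auto
  have "(1+x)/(1-x) < (1+y)/(1-y) \<longleftrightarrow> x < y" using assms by (simp add: field_simps)
  thus ?thesis using p by (simp add: H_def)
qed

lemma H_le_iff: assumes "\<bar>x\<bar> < 1" "\<bar>y\<bar> < 1" shows "H x \<le> H y \<longleftrightarrow> x \<le> y"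
  using H_less_iff[OF assms(2,1)] by (simp add: not_less[symmetric])

lemma H_0 [simp]: "H 0 = 0" by (simp add: H_def)

lemma H_neg: assumes "\<bar>x\<bar> < 1" shows "H (-x) = - H x"
proof -
  have p: "(1+x)/(1-x) > 0" using assms by auto
  have "1 - x > 0" "1 + x > 0" using assms by auto
  thus ?thesis by (simp add: H_def ln_div)
qed

lemma cs: "Re z * Re w + Im z * Im w \<le> cmod z * cmod w"
  using norm_cauchy_schwarz[of z w] by (simp add: inner_complex_def)

lemma arcosh_mono: "1 \<le> (x::real) \<Longrightarrow> x \<le> y \<Longrightarrow> arcosh x \<le> arcosh y"
  using arcosh_less_iff_real[of y x] by linarith

lemma center_ineq: assumes "cmod z < 1" "cmod w < 1"
  shows "pdist z w \<ge> \<bar>H (cmod w) - H (cmod z)\<bar>"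
proof -
  have a: "\<bar>cmod w\<bar> < 1" "\<bar>cmod z\<bar> < 1" using assms by auto
  have r: "(cmod z)^2 < 1" "(cmod w)^2 < 1" using assms by (simp_all add: abs_square_less_1)
  have "cosh (H (cmod w) - H (cmod z)) = ((1 + (cmod w)^2) * (1 + (cmod z)^2) - 4 * cmod w * cmod z) / ((1 - (cmod w)^2) * (1 - (cmod z)^2))"
    by (rule cosh_H[OF a])
  also have "\<dots> \<le> ((1 + (cmod z)^2) * (1 + (cmod w)^2) - 4 * (Re z * Re w + Im z * Im w)) / ((1 - (cmod z)^2) * (1 - (cmod w)^2))"
  proof -
    have den: "(1 - (cmod w)^2) * (1 - (cmod z)^2) = (1 - (cmod z)^2) * (1 - (cmod w)^2)" by simp
    have num: "(1 + (cmod w)^2) * (1 + (cmod z)^2) - 4 * cmod w * cmod z \<le> (1 + (cmod z)^2) * (1 + (cmod w)^2) - 4 * (Re z * Re w + Im z * Im w)"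
      using cs[of z w] by (simp add: algebra_simps)
    show ?thesis unfolding den by (rule divide_right_mono[OF num]) (use r in simp)
  qed
  also have "\<dots> = 1 + pp z w" using pp_alt[OF assms] by simp
  finally have "arcosh (cosh (H (cmod w) - H (cmod z))) \<le> arcosh (1 + pp z w)"
    by (intro arcosh_mono) (auto simp: cosh_real_ge_1)
  thus ?thesis by (simp add: pdist_def arcosh_cosh_abs)
qed

lemma pdist_0: assumes "cmod w < 1" shows "pdist 0 w = H (cmod w)"
proof -
  have "pdist 0 w = pdist (of_real 0) (of_real (cmod w))"
    by (simp add: pdist_def pp_def)
  also have "\<dots> = \<bar>H 0 - H (cmod w)\<bar>" using assms by (intro pdist_real) auto
  also have "\<dots> = H (cmod w)" using H_le_iff[of 0 "cmod w"] assms by auto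
  finally show ?thesis .
qed

lemma mob_self [simp]: "mob w w = 0" by (simp add: mob_def)

lemma pdist_triangle: assumes "cmod u < 1" "cmod z < 1" "cmod v < 1"
  shows "pdist u v \<le> pdist u z + pdist z v"
proof -
  have "pdist u z = pdist 0 (mob u z)" "pdist z v = pdist (mob u z) (mob u v)" "pdist u v = pdist 0 (mob u v)"
    using pdist_mob[of u] assms by (metis mob_self)+
  moreover have "cmod (mob u z) < 1" "cmod (mob u v) < 1" using assms mob_disc by auto
  ultimately show ?thesis using center_ineq[of "mob u z" "mob u v"] pdist_0 by auto
qed

lemma mob_real: "mob (of_real p) (of_real x) = of_real ((x - p) / (1 - p * x))"
  by (simp add: mob_def)

lemma center_eq: assumes "cmod z < 1" "\<bar>s\<bar> < 1" "s > 0"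
  and le: "pdist 0 z + pdist z (of_real s) \<le> pdist 0 (of_real s)"
  shows "Im z = 0 \<and> Re z \<ge> 0"
proof (rule ccontr)
  assume ne: "\<not> (Im z = 0 \<and> Re z \<ge> 0)"
  have lt: "Re z < cmod z"
  proof -
    have "(cmod z)^2 = (Re z)^2 + (Im z)^2" by (simp add: cmod_power2)
    have "Re z \<le> cmod z" by (rule complex_Re_le_cmod)
    moreover have "Re z \<noteq> cmod z"
    proof
      assume e: "Re z = cmod z"
      hence "Im z = 0" using \<open>(cmod z)^2 = (Re z)^2 + (Im z)^2\<close> by simp
      thus False using ne e by simp
    qed
    ultimately show ?thesis by simp
  qed
  have a: "\<bar>s\<bar> < 1" "\<bar>cmod z\<bar> < 1" using assms by auto
  have sc: "cmod (of_real s) < 1" using assms by simp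
  have r: "(cmod z)^2 < 1" "s^2 < 1" using assms by (simp_all add: abs_square_less_1)
  have "cosh (H s - H (cmod z)) = ((1 + s^2) * (1 + (cmod z)^2) - 4 * s * cmod z) / ((1 - s^2) * (1 - (cmod z)^2))"
    by (rule cosh_H[OF a])
  also have "\<dots> < 1 + pp z (of_real s)"
  proof -
    have "4 * s * Re z < 4 * s * cmod z" using lt assms by simp
    hence num: "(1 + s^2) * (1 + (cmod z)^2) - 4 * s * cmod z < (1 + (cmod z)^2) * (1 + (cmod (of_real s))^2) - 4 * (Re z * Re (of_real s) + Im z * Im (of_real s))"
      by (simp add: algebra_simps)
    have den: "(1 - s^2) * (1 - (cmod z)^2) = (1 - (cmod z)^2) * (1 - (cmod (of_real s))^2)" by simp
    show ?thesis unfolding pp_alt[OF assms(1) sc] den by (rule divide_strict_right_mono[OF num]) (use r in simp)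
  qed
  finally have "arcosh (cosh (H s - H (cmod z))) < arcosh (1 + pp z (of_real s))"
    using pp_nonneg[OF assms(1) sc] by (subst arcosh_less_iff_real) (auto simp: cosh_real_ge_1)
  hence "pdist z (of_real s) > \<bar>H s - H (cmod z)\<bar>" by (simp add: pdist_def arcosh_cosh_abs)
  moreover have "pdist 0 z = H (cmod z)" "pdist 0 (of_real s) = H s" using pdist_0 assms by auto
  ultimately show False using le by auto
qed

lemma real_between: assumes "\<bar>p\<bar> < 1" "\<bar>q\<bar> < 1" "p < q" "cmod z < 1"
  and le: "pdist (of_real p) z + pdist z (of_real q) \<le> pdist (of_real p) (of_real q)"
  shows "Im z = 0 \<and> p \<le> Re z \<and> Re z \<le> q"
proof -
  define s where "s = (q - p) / (1 - p * q)"
  have pq: "1 - p * q > 0"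
  proof -
    have "\<bar>p * q\<bar> < 1" using assms by (simp add: abs_mult) (metis abs_ge_zero mult_strict_mono' mult_1_right less_le_trans mult_le_one less_imp_le abs_less_iff order.strict_trans2 mult_strict_mono)
    thus ?thesis by simp
  qed
  have sp: "s > 0" using pq assms by (simp add: s_def)
  have sl: "s < 1"
  proof -
    have "(1 + p) * (1 - q) > 0" using assms by (intro mult_pos_pos) auto
    hence "q - p < 1 - p * q" by (simp add: algebra_simps)
    thus ?thesis using pq by (simp add: s_def)
  qed
  have pc: "cmod (of_real p) < 1" "cmod (of_real q) < 1" using assms by auto
  have ms: "mob (of_real p) (of_real q) = of_real s" by (simp add: mob_real s_def)
  define \<zeta> where "\<zeta> = mob (of_real p) z"
  have zc: "cmod \<zeta> < 1" using mob_disc pc assms by (simp add: \<zeta>_def)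
  have "pdist 0 \<zeta> + pdist \<zeta> (of_real s) \<le> pdist 0 (of_real s)"
    using le pdist_mob[of "of_real p"] pc assms unfolding \<zeta>_def ms[symmetric]
    by (metis mob_self)
  hence "Im \<zeta> = 0 \<and> Re \<zeta> \<ge> 0" using center_eq[OF zc _ sp] sl sp by auto
  hence ze: "\<zeta> = of_real (Re \<zeta>)" by (simp add: complex_eq_iff)
  have "z = mob (- of_real p) \<zeta>" using mob_inv pc assms by (simp add: \<zeta>_def less_imp_le)
  also have "\<dots> = mob (of_real (-p)) (of_real (Re \<zeta>))" using ze by simp
  also have "\<dots> = of_real ((Re \<zeta> - (-p)) / (1 - (-p) * Re \<zeta>))" by (rule mob_real)
  finally have "z = of_real ((Re \<zeta> - (-p)) / (1 - (-p) * Re \<zeta>))" .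
  hence zr: "z = of_real (Re z)" "Im z = 0" by (simp_all add: complex_eq_iff)
  define x where "x = Re z"
  have xa: "\<bar>x\<bar> < 1" using assms zr by (metis norm_of_real x_def)
  have "\<bar>H p - H x\<bar> + \<bar>H x - H q\<bar> \<le> \<bar>H p - H q\<bar>"
    using le zr(1) pdist_real[of p x] pdist_real[of x q] pdist_real[of p q] assms xa unfolding x_def by metis
  moreover have "H p < H q" using H_less_iff assms by auto
  ultimately have "H p \<le> H x \<and> H x \<le> H q" by linarith
  thus ?thesis using H_le_iff assms xa zr unfolding x_def by auto
qed



lemma geoseg_sub: "geoseg u v \<subseteq> geoseg v u"
proof
  fix z assume "z \<in> geoseg u v"
  then obtain g where g: "g 0 = u" "g 1 = v" "g ` {0..1} \<subseteq> pdisc"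
    "\<forall>s\<in>{0..1}. \<forall>t\<in>{0..1}. pdist (g s) (g t) = \<bar>s - t\<bar> * pdist u v" "z \<in> g ` {0..1}"
    unfolding geoseg_def by blast
  define h where "h = (\<lambda>s. g (1 - s))"
  have im: "h ` {0..1} = g ` {0..1}"
  proof -
    have "(\<lambda>s. 1 - s) ` {0..1::real} = {0..1}"
    proof
      show "(\<lambda>s. 1 - s) ` {0..1::real} \<subseteq> {0..1}" by auto
      show "{0..1} \<subseteq> (\<lambda>s. 1 - s) ` {0..1::real}"
      proof
        fix x :: real assume "x \<in> {0..1}"
        hence "1 - x \<in> {0..1}" "x = 1 - (1 - x)" by auto
        thus "x \<in> (\<lambda>s. 1 - s) ` {0..1}" by blast
      qed
    qed
    moreover have "h ` {0..1} = g ` ((\<lambda>s. 1 - s) ` {0..1})" unfolding h_def by (simp only: image_image)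
    ultimately show ?thesis by simp
  qed
  have iso: "\<forall>s\<in>{0..1}. \<forall>t\<in>{0..1}. pdist (h s) (h t) = \<bar>s - t\<bar> * pdist v u"
  proof (intro ballI)
    fix s t :: real assume "s \<in> {0..1}" "t \<in> {0..1}"
    hence "pdist (h s) (h t) = \<bar>(1-s) - (1-t)\<bar> * pdist u v" using g(4) by (simp add: h_def)
    thus "pdist (h s) (h t) = \<bar>s - t\<bar> * pdist v u" by (simp add: pdist_sym abs_minus_commute)
  qed
  have h01: "h 0 = v" "h 1 = u" using g by (simp_all add: h_def)
  show "z \<in> geoseg v u" unfolding geoseg_def
    apply (intro CollectI exI[of _ h])
    using g(3,5) im iso h01 by simp
qed

lemma geoseg_sym: "geoseg u v = geoseg v u"
  using geoseg_sub by blast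

lemma geoseg_transport:
  assumes f: "\<And>z. z \<in> pdisc \<Longrightarrow> f z \<in> pdisc" and f': "\<And>z. z \<in> pdisc \<Longrightarrow> f' z \<in> pdisc"
    and inv1: "\<And>z. z \<in> pdisc \<Longrightarrow> f' (f z) = z" and inv2: "\<And>z. z \<in> pdisc \<Longrightarrow> f (f' z) = z"
    and iso: "\<And>x y. x \<in> pdisc \<Longrightarrow> y \<in> pdisc \<Longrightarrow> pdist (f x) (f y) = pdist x y"
    and uv: "u \<in> pdisc" "v \<in> pdisc"
  shows "geoseg (f u) (f v) = f ` geoseg u v"
proof
  show "f ` geoseg u v \<subseteq> geoseg (f u) (f v)"
  proof
    fix y assume "y \<in> f ` geoseg u v"
    then obtain z where z: "z \<in> geoseg u v" "y = f z" by blast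
    then obtain g where g: "g 0 = u" "g 1 = v" "g ` {0..1} \<subseteq> pdisc"
      "\<forall>s\<in>{0..1}. \<forall>t\<in>{0..1}. pdist (g s) (g t) = \<bar>s - t\<bar> * pdist u v" "z \<in> g ` {0..1}"
      unfolding geoseg_def by blast
    have "(f \<circ> g) 0 = f u" "(f \<circ> g) 1 = f v" using g by auto
    moreover have "(f \<circ> g) ` {0..1} \<subseteq> pdisc" using g(3) f by auto
    moreover have "\<forall>s\<in>{0..1}. \<forall>t\<in>{0..1}. pdist ((f \<circ> g) s) ((f \<circ> g) t) = \<bar>s - t\<bar> * pdist (f u) (f v)"
      using g(3,4) iso uv by (auto simp: image_subset_iff)
    moreover have "y \<in> (f \<circ> g) ` {0..1}" using z g(5) by auto
    ultimately show "y \<in> geoseg (f u) (f v)" unfolding geoseg_def by blast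
  qed
next
  show "geoseg (f u) (f v) \<subseteq> f ` geoseg u v"
  proof
    fix y assume "y \<in> geoseg (f u) (f v)"
    then obtain g where g: "g 0 = f u" "g 1 = f v" "g ` {0..1} \<subseteq> pdisc"
      "\<forall>s\<in>{0..1}. \<forall>t\<in>{0..1}. pdist (g s) (g t) = \<bar>s - t\<bar> * pdist (f u) (f v)" "y \<in> g ` {0..1}"
      unfolding geoseg_def by blast
    have "(f' \<circ> g) 0 = u" "(f' \<circ> g) 1 = v" using g inv1 uv by auto
    moreover have "(f' \<circ> g) ` {0..1} \<subseteq> pdisc" using g(3) f' by auto
    moreover have "\<forall>s\<in>{0..1}. \<forall>t\<in>{0..1}. pdist ((f' \<circ> g) s) ((f' \<circ> g) t) = \<bar>s - t\<bar> * pdist u v"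
    proof (intro ballI)
      fix s t :: real assume st: "s \<in> {0..1}" "t \<in> {0..1}"
      have a: "g s \<in> pdisc" "g t \<in> pdisc" using g(3) st by auto
      have "pdist ((f' \<circ> g) s) ((f' \<circ> g) t) = pdist (f (f' (g s))) (f (f' (g t)))"
        using iso[OF f'[OF a(1)] f'[OF a(2)]] by simp
      also have "\<dots> = pdist (g s) (g t)" using inv2 a by simp
      finally show "pdist ((f' \<circ> g) s) ((f' \<circ> g) t) = \<bar>s - t\<bar> * pdist u v" using g(4) st iso uv by auto
    qed
    moreover obtain s where s: "s \<in> {0..1}" "y = g s" using g(5) by blast
    moreover have "y = f ((f' \<circ> g) s)"
    proof -
      have "g s \<in> pdisc" using g(3) s by auto
      thus ?thesis using s inv2 by simp
    qed
    ultimately show "y \<in> f ` geoseg u v" unfolding geoseg_def by blast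
  qed
qed

lemma geoseg_mob: assumes "cmod w < 1" "u \<in> pdisc" "v \<in> pdisc"
  shows "geoseg (mob w u) (mob w v) = mob w ` geoseg u v"
proof (rule geoseg_transport[where f' = "mob (-w)"])
  have w': "cmod (-w) < 1" using assms by simp
  show "\<And>z. z \<in> pdisc \<Longrightarrow> mob w z \<in> pdisc" using assms mob_disc by (simp add: pdisc_def)
  show "\<And>z. z \<in> pdisc \<Longrightarrow> mob (-w) z \<in> pdisc" using w' mob_disc by (simp add: pdisc_def)
  show "\<And>z. z \<in> pdisc \<Longrightarrow> mob (-w) (mob w z) = z" using assms mob_inv by (simp add: pdisc_def)
  show "\<And>z. z \<in> pdisc \<Longrightarrow> mob w (mob (-w) z) = z" using w' mob_inv[of "-w"] by (simp add: pdisc_def)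
  show "\<And>x y. x \<in> pdisc \<Longrightarrow> y \<in> pdisc \<Longrightarrow> pdist (mob w x) (mob w y) = pdist x y"
    using assms pdist_mob by (simp add: pdisc_def)
qed (use assms in auto)

lemma geoseg_rot: assumes "cmod r = 1" "u \<in> pdisc" "v \<in> pdisc"
  shows "geoseg (r * u) (r * v) = (\<lambda>z. r * z) ` geoseg u v"
proof -
  have rr: "cnj r * r = 1" using assms(1) by (metis complex_norm_square mult.commute of_real_1 power_one)
  have rr': "r * cnj r = 1" using rr by (simp add: mult.commute)
  have c: "cmod (cnj r) = 1" using assms by simp
  show ?thesis
  proof (rule geoseg_transport[where f' = "\<lambda>z. cnj r * z"])
    show "\<And>z. z \<in> pdisc \<Longrightarrow> r * z \<in> pdisc" using assms by (simp add: pdisc_def norm_mult)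
    show "\<And>z. z \<in> pdisc \<Longrightarrow> cnj r * z \<in> pdisc" using c by (simp add: pdisc_def norm_mult)
    show "\<And>z. cnj r * (r * z) = z" by (simp add: mult.assoc[symmetric] rr)
    show "\<And>z. r * (cnj r * z) = z" by (simp add: mult.assoc[symmetric] rr')
    show "\<And>x y. pdist (r * x) (r * y) = pdist x y" using pdist_rot[OF assms(1)] by simp
  qed (use assms in auto)
qed

lemma geoseg_real: assumes "\<bar>p\<bar> < 1" "\<bar>q\<bar> < 1" "p < q"
  shows "geoseg (complex_of_real p) (complex_of_real q) = complex_of_real ` {p..q}"
proof
  show "geoseg (complex_of_real p) (complex_of_real q) \<subseteq> complex_of_real ` {p..q}"
  proof
    fix z assume "z \<in> geoseg (complex_of_real p) (complex_of_real q)"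
    then obtain g where g: "g 0 = complex_of_real p" "g 1 = complex_of_real q" "g ` {0..1} \<subseteq> pdisc"
      "\<forall>s\<in>{0..1}. \<forall>t\<in>{0..1}. pdist (g s) (g t) = \<bar>s - t\<bar> * pdist (complex_of_real p) (complex_of_real q)" "z \<in> g ` {0..1}"
      unfolding geoseg_def by blast
    then obtain s where s: "s \<in> {0..1}" "z = g s" by blast
    have "pdist (g 0) (g s) + pdist (g s) (g 1) = pdist (complex_of_real p) (complex_of_real q)"
      using g(4) s(1) by (auto simp: algebra_simps)
    hence "pdist (complex_of_real p) z + pdist z (complex_of_real q) \<le> pdist (complex_of_real p) (complex_of_real q)"
      using g s by simp
    moreover have "cmod z < 1" using g(3) s by (auto simp: pdisc_def image_subset_iff)
    ultimately have "Im z = 0 \<and> p \<le> Re z \<and> Re z \<le> q" using real_between assms by blast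
    thus "z \<in> complex_of_real ` {p..q}" by (auto simp: image_iff complex_eq_iff intro!: bexI[of _ "Re z"])
  qed
next
  show "complex_of_real ` {p..q} \<subseteq> geoseg (complex_of_real p) (complex_of_real q)"
  proof
    fix z assume "z \<in> complex_of_real ` {p..q}"
    then obtain x where x: "x \<in> {p..q}" "z = complex_of_real x" by blast
    have xa: "\<bar>x\<bar> < 1" using x assms by auto
    have Hpq: "H p < H q" using H_less_iff assms by auto
    define g where "g = (\<lambda>s. complex_of_real (T ((1 - s) * H p + s * H q)))"
    have g0: "g 0 = complex_of_real p" using T_H assms by (simp add: g_def)
    have g1: "g 1 = complex_of_real q" using T_H assms by (simp add: g_def)
    have gd: "g ` {0..1} \<subseteq> pdisc" using T_bound by (auto simp: g_def pdisc_def)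
    have "\<forall>s\<in>{0..1}. \<forall>t\<in>{0..1}. pdist (g s) (g t) = \<bar>s - t\<bar> * pdist (complex_of_real p) (complex_of_real q)"
    proof (intro ballI)
      fix s t :: real
      have "pdist (g s) (g t) = \<bar>((1 - s) * H p + s * H q) - ((1 - t) * H p + t * H q)\<bar>"
        unfolding g_def by (subst pdist_real) (auto simp: T_bound H_T)
      also have "\<dots> = \<bar>s - t\<bar> * \<bar>H p - H q\<bar>"
        by (simp add: abs_mult[symmetric] algebra_simps)
      finally show "pdist (g s) (g t) = \<bar>s - t\<bar> * pdist (complex_of_real p) (complex_of_real q)" using pdist_real assms by simp
    qed
    moreover have mem: "z \<in> g ` {0..1}"
    proof -
      define s where "s = (H x - H p) / (H q - H p)"
      have "H p \<le> H x" "H x \<le> H q" using H_le_iff xa assms x by auto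
      hence "s \<in> {0..1}" using Hpq by (auto simp: s_def field_simps)
      moreover have "(1 - s) * H p + s * H q = H x"
      proof -
        have "s * (H q - H p) = H x - H p" using Hpq by (simp add: s_def)
        moreover have "(1 - s) * H p + s * H q = H p + s * (H q - H p)" by (simp add: algebra_simps)
        ultimately show ?thesis by simp
      qed
      hence "g s = z" using T_H xa x by (simp add: g_def)
      ultimately show ?thesis by blast
    qed
    ultimately show "z \<in> geoseg (complex_of_real p) (complex_of_real q)" unfolding geoseg_def
      apply (intro CollectI exI[of _ g])
      using g0 g1 gd by simp
  qed
qed



lemma pdist_mobreal: assumes "cmod w < 1" "\<bar>x\<bar> < 1" "\<bar>y\<bar> < 1"
  shows "pdist (mob w (of_real x)) (mob w (of_real y)) = \<bar>H x - H y\<bar>"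
  using pdist_mob[of w "of_real x" "of_real y"] pdist_real[of x y] assms by simp

lemma seg_char: assumes "cmod w < 1" "0 < \<sigma>" "\<sigma> < 1"
  shows "geoseg (mob w (of_real \<sigma>)) (mob w (of_real (-\<sigma>))) = (\<lambda>x. mob w (of_real x)) ` {-\<sigma>..\<sigma>}"
proof -
  have d: "complex_of_real \<sigma> \<in> pdisc" "complex_of_real (-\<sigma>) \<in> pdisc" using assms by (auto simp: pdisc_def)
  have "geoseg (mob w (of_real \<sigma>)) (mob w (of_real (-\<sigma>))) = mob w ` geoseg (of_real \<sigma>) (of_real (-\<sigma>))"
    by (rule geoseg_mob[OF assms(1) d])
  also have "geoseg (of_real \<sigma>) (of_real (-\<sigma>)) = geoseg (complex_of_real (-\<sigma>)) (complex_of_real \<sigma>)"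
    by (rule geoseg_sym)
  also have "\<dots> = complex_of_real ` {-\<sigma>..\<sigma>}" using assms by (intro geoseg_real) auto
  finally show ?thesis by (simp add: image_image)
qed

lemma seg_hmid: assumes "cmod w < 1" "0 < \<sigma>" "\<sigma> < 1"
  shows "hmid (mob w (of_real \<sigma>)) (mob w (of_real (-\<sigma>))) = mob w 0"
proof -
  have s1: "\<bar>\<sigma>\<bar> < 1" "\<bar>-\<sigma>\<bar> < 1" "\<bar>0::real\<bar> < 1" using assms by auto
  have Hs: "H \<sigma> > 0" using H_less_iff[of 0 \<sigma>] assms by auto
  have dd: "pdist (mob w (of_real \<sigma>)) (mob w (of_real (-\<sigma>))) = 2 * H \<sigma>"
    using pdist_mobreal[OF assms(1) s1(1,2)] H_neg[OF s1(1)] Hs by simp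
  have d1: "pdist (mob w (of_real \<sigma>)) (mob w 0) = H \<sigma>"
    using pdist_mobreal[OF assms(1) s1(1,3)] Hs by simp
  have d2: "pdist (mob w 0) (mob w (of_real (-\<sigma>))) = H \<sigma>"
    using pdist_mobreal[OF assms(1) s1(3,2)] H_neg[OF s1(1)] Hs by simp
  show ?thesis unfolding hmid_def
  proof (rule the_equality)
    show "mob w 0 \<in> pdisc \<and> pdist (mob w (of_real \<sigma>)) (mob w 0) = pdist (mob w (of_real \<sigma>)) (mob w (of_real (-\<sigma>))) / 2
      \<and> pdist (mob w 0) (mob w (of_real (-\<sigma>))) = pdist (mob w (of_real \<sigma>)) (mob w (of_real (-\<sigma>))) / 2"
      using dd d1 d2 mob_disc[OF assms(1), of 0] by (simp add: pdisc_def)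
  next
    fix m assume m: "m \<in> pdisc \<and> pdist (mob w (of_real \<sigma>)) m = pdist (mob w (of_real \<sigma>)) (mob w (of_real (-\<sigma>))) / 2
      \<and> pdist m (mob w (of_real (-\<sigma>))) = pdist (mob w (of_real \<sigma>)) (mob w (of_real (-\<sigma>))) / 2"
    define \<zeta> where "\<zeta> = mob (-w) m"
    have w': "cmod (-w) < 1" using assms by simp
    have mc: "cmod m < 1" using m by (simp add: pdisc_def)
    have zc: "cmod \<zeta> < 1" using mob_disc[OF w' mc] by (simp add: \<zeta>_def)
    have mz: "m = mob w \<zeta>" using mob_inv[OF w' less_imp_le[OF mc]] by (simp add: \<zeta>_def)
    have e1: "pdist (of_real \<sigma>) \<zeta> = H \<sigma>"
      using m dd pdist_mob[OF assms(1), of "of_real \<sigma>" \<zeta>] zc s1 mz by simp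
    have e2: "pdist \<zeta> (of_real (-\<sigma>)) = H \<sigma>"
      using m dd pdist_mob[OF assms(1), of \<zeta> "of_real (-\<sigma>)"] zc s1 mz by simp
    have e3: "pdist (of_real (-\<sigma>)) (of_real \<sigma>) = 2 * H \<sigma>"
      using pdist_real[OF s1(2,1)] H_neg[OF s1(1)] Hs by simp
    have "Im \<zeta> = 0 \<and> -\<sigma> \<le> Re \<zeta> \<and> Re \<zeta> \<le> \<sigma>"
      using real_between[of "-\<sigma>" \<sigma> \<zeta>] zc s1 assms e1 e2 e3 by (simp add: pdist_sym)
    hence zr: "\<zeta> = of_real (Re \<zeta>)" "Re \<zeta> \<le> \<sigma>" by (simp_all add: complex_eq_iff)
    have ra: "\<bar>Re \<zeta>\<bar> < 1" using zc zr by (metis norm_of_real)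
    have "\<bar>H \<sigma> - H (Re \<zeta>)\<bar> = H \<sigma>" using e1 pdist_real[OF s1(1) ra] zr by simp
    moreover have "H (Re \<zeta>) \<le> H \<sigma>" using H_le_iff[OF ra s1(1)] zr by simp
    ultimately have "H (Re \<zeta>) = 0" by simp
    hence "Re \<zeta> = 0" using T_H[OF ra] by (simp add: T_def)
    thus "m = mob w 0" using mz zr by simp
  qed
qed



definition tp :: "real \<Rightarrow> real \<Rightarrow> real" where
  "tp a b = ((1 + a^2 + b^2) - sqrt ((1 + a^2 + b^2)^2 - 4 * b^2)) / (2 * b)"

lemma tp_props: assumes "a > 0" "b > 0" "a^2 + b^2 < 1"
  shows "0 < tp a b" "tp a b < 1" "b * (1 + (tp a b)^2) = (1 + a^2 + b^2) * tp a b"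
proof -
  define K where "K = 1 + a^2 + b^2"
  have K2b: "K > 2 * b"
  proof -
    have "a^2 + (1 - b)^2 > 0" using assms by (simp add: add_pos_nonneg)
    thus ?thesis by (simp add: K_def power2_eq_square algebra_simps)
  qed
  have pos: "K^2 - 4 * b^2 > 0"
  proof -
    have "K^2 > (2*b)^2" using K2b assms by (intro power_strict_mono) auto
    moreover have "(2*b)^2 = 4*b^2" by (simp add: power2_eq_square)
    ultimately show ?thesis by linarith
  qed
  define S where "S = sqrt (K^2 - 4 * b^2)"
  have S0: "S \<ge> 0" unfolding S_def using pos by simp
  have SS: "S^2 = K^2 - 4 * b^2" by (simp add: S_def) (use pos in linarith)
  have tdef: "tp a b = (K - S) / (2 * b)" by (simp add: tp_def K_def S_def)
  have SK: "S < K"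
  proof -
    have "S^2 < K^2" using SS assms by simp
    thus ?thesis using K2b assms by (smt (verit) S0 power_mono)
  qed
  have SK2: "K - 2 * b < S"
  proof -
    have h: "K * b > 2 * b^2" using mult_strict_right_mono[OF K2b assms(2)] by (simp add: power2_eq_square)
    have "(K-2*b)^2 = K^2 - 4*(K*b) + 4*b^2" by (simp add: power2_eq_square algebra_simps)
    hence "(K - 2*b)^2 < S^2" using SS h by linarith
    thus ?thesis using S0 K2b by (smt (verit) power_mono)
  qed
  show "0 < tp a b" using SK assms by (simp add: tdef)
  show "tp a b < 1" using SK2 assms by (simp add: tdef field_simps)
  have "b * (1 + ((K - S) / (2 * b))^2) = K * ((K - S) / (2 * b))"
    using assms SS by (simp add: field_simps power2_eq_square)
  thus "b * (1 + (tp a b)^2) = (1 + a^2 + b^2) * tp a b" by (simp add: tdef K_def)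
qed

lemma mobL_explicit: "mob (Complex 0 t) (of_real x) = Complex (x * (1 - t^2) / (1 + t^2 * x^2)) (- t * (1 + x^2) / (1 + t^2 * x^2))"
proof -
  have d: "1 + t^2 * x^2 \<noteq> 0" by (smt (verit) zero_le_power2 mult_nonneg_nonneg)
  show ?thesis unfolding mob_def using d
    by (simp add: complex_eq_iff Re_divide Im_divide power2_eq_square field_simps)
qed

definition sg :: "real \<Rightarrow> real \<Rightarrow> real" where
  "sg a b = Re (mob (Complex 0 (- tp a b)) (Complex a (-b)))"

lemma corner: assumes "a > 0" "b > 0" "a^2 + b^2 < 1"
  shows "0 < sg a b" "sg a b < 1"
    "Complex a (-b) = mob (Complex 0 (tp a b)) (of_real (sg a b))"
    "Complex (-a) (-b) = mob (Complex 0 (tp a b)) (of_real (- sg a b))"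
proof -
  define t where "t = tp a b"
  have t: "0 < t" "t < 1" "b * (1 + t^2) = (1 + a^2 + b^2) * t" using tp_props[OF assms] by (simp_all add: t_def)
  define u where "u = Complex a (-b)"
  have uc: "cmod u < 1" using assms by (simp add: u_def cmod_def)
  have wc: "cmod (Complex 0 (-t)) < 1" "cmod (Complex 0 t) < 1" using t by (simp_all add: cmod_def)
  have den: "(1 - t * b)^2 + (t * a)^2 > 0"
  proof -
    have "t * b < 1" using t assms by (smt (verit) mult_less_cancel_left1 power2_less_1_iff cmod_def abs_square_less_1 power2_eq_square mult_strict_mono)
    thus ?thesis by (smt (verit) zero_le_power2 power2_less_0 power_strict_mono zero_less_power2)
  qed
  have im0: "Im (mob (Complex 0 (-t)) u) = 0"
    unfolding mob_def u_def using t(3) den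
    by (simp add: Im_divide power2_eq_square algebra_simps)
  have re: "Re (mob (Complex 0 (-t)) u) = a * (1 - t^2) / ((1 - t * b)^2 + (t * a)^2)"
    unfolding mob_def u_def using den
    by (simp add: Re_divide power2_eq_square algebra_simps)
  have "a * (1 - t^2) > 0" using t assms by (simp add: power_less_one_iff abs_square_less_1)
  hence "Re (mob (Complex 0 (-t)) u) > 0" using re den by simp
  thus "0 < sg a b" by (simp add: sg_def u_def t_def)
  have "cmod (mob (Complex 0 (-t)) u) < 1" using mob_disc[OF wc(1) uc] .
  hence "\<bar>Re (mob (Complex 0 (-t)) u)\<bar> < 1" using abs_Re_le_cmod le_less_trans by blast
  thus "sg a b < 1" by (simp add: sg_def u_def t_def)
  have me: "mob (Complex 0 (-t)) u = of_real (sg a b)" using im0 by (simp add: complex_eq_iff sg_def u_def t_def)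
  have "u = mob (- Complex 0 (-t)) (mob (Complex 0 (-t)) u)" using mob_inv[OF wc(1) less_imp_le[OF uc]] by simp
  moreover have "- Complex 0 (-t) = Complex 0 t" by (simp add: complex_eq_iff)
  ultimately show c1: "Complex a (-b) = mob (Complex 0 (tp a b)) (of_real (sg a b))" using me by (simp add: u_def t_def)
  have "mob (Complex 0 (tp a b)) (of_real (- sg a b)) = - cnj (mob (Complex 0 (tp a b)) (of_real (sg a b)))"
    unfolding mobL_explicit by (simp add: complex_eq_iff)
  thus "Complex (-a) (-b) = mob (Complex 0 (tp a b)) (of_real (- sg a b))" using c1[symmetric] by (simp add: complex_eq_iff)
qed



definition Lp :: "real \<Rightarrow> real \<Rightarrow> complex" where
  "Lp t x = mob (Complex 0 t) (of_real x)"

lemma Lp_explicit: "Lp t x = Complex (x * (1 - t^2) / (1 + t^2 * x^2)) (- t * (1 + x^2) / (1 + t^2 * x^2))"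
  by (simp add: Lp_def mobL_explicit)

lemma Dpos: "1 + t^2 * x^2 > (0::real)"
  by (smt (verit) zero_le_power2 mult_nonneg_nonneg)

lemma Lp_norm2: "(cmod (Lp t x))^2 = (x^2 + t^2) / (1 + t^2 * x^2)"
proof -
  have d: "1 + t^2 * x^2 \<noteq> 0" using Dpos[of t x] by simp
  have "(cmod (Lp t x))^2 = (x * (1 - t^2))^2 / (1 + t^2 * x^2)^2 + (t * (1 + x^2))^2 / (1 + t^2 * x^2)^2"
    unfolding Lp_explicit cmod_power2 by (simp add: power_divide)
  also have "\<dots> = ((x * (1 - t^2))^2 + (t * (1 + x^2))^2) / (1 + t^2 * x^2)^2" by (simp add: add_divide_distrib)
  also have "(x * (1 - t^2))^2 + (t * (1 + x^2))^2 = (x^2 + t^2) * (1 + t^2 * x^2)"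
    by (simp add: power2_eq_square algebra_simps)
  also have "(x^2 + t^2) * (1 + t^2 * x^2) / (1 + t^2 * x^2)^2 = (x^2 + t^2) / (1 + t^2 * x^2)"
    using d by (simp add: power2_eq_square)
  finally show ?thesis .
qed

definition PL :: "real \<Rightarrow> complex \<Rightarrow> real" where
  "PL t z = (1 + t^2) * Im z + t * (1 + (cmod z)^2)"

lemma PL_Lp: "PL t (Lp t x) = 0"
proof -
  have d: "1 + t^2 * x^2 \<noteq> 0" using Dpos[of t x] by simp
  have "PL t (Lp t x) = (1 + t^2) * (- t * (1 + x^2) / (1 + t^2 * x^2)) + t * (1 + (x^2 + t^2) / (1 + t^2 * x^2))"
    unfolding PL_def Lp_norm2 by (simp add: Lp_explicit)
  also have "\<dots> = 0" using d by (simp add: field_simps)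
  finally show ?thesis .
qed

lemma Lp_Im: "t > 0 \<Longrightarrow> Im (Lp t x) < 0"
  using Dpos[of t x] by (simp add: Lp_explicit divide_neg_pos add_pos_nonneg)

lemma Im_mob_PL: "Im (mob (Complex 0 (-t)) z) = PL t z / (cmod (1 - cnj (Complex 0 (-t)) * z))^2"
proof -
  have "Im (mob (Complex 0 (-t)) z) = ((Im z + t) * (1 + t * Im z) + Re z * (t * Re z)) / (cmod (1 - cnj (Complex 0 (-t)) * z))^2"
    unfolding mob_def by (simp add: Im_divide cmod_power2 algebra_simps)
  also have "(Im z + t) * (1 + t * Im z) + Re z * (t * Re z) = PL t z"
    unfolding PL_def cmod_power2 by (simp add: algebra_simps power2_eq_square)
  finally show ?thesis .
qed

lemma comb: "(D::real) \<noteq> 0 \<Longrightarrow> c * (u / D) + s * (1 + v / D) = (c * u + s * (D + v)) / D"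
  by (simp add: field_simps)

lemma PL_rot_Lp1: "PL s (- \<i> * Lp t x) = (s * (1 + t^2) * (1 + x^2) - (1 + s^2) * (1 - t^2) * x) / (1 + t^2 * x^2)"
proof -
  have d: "1 + t^2 * x^2 \<noteq> 0" using Dpos[of t x] by simp
  have n: "cmod (- \<i> * Lp t x) = cmod (Lp t x)" by (simp add: norm_mult)
  have "PL s (- \<i> * Lp t x) = (1 + s^2) * ((- (x * (1 - t^2))) / (1 + t^2 * x^2)) + s * (1 + (x^2 + t^2) / (1 + t^2 * x^2))"
    unfolding PL_def n Lp_norm2 by (simp add: Lp_explicit)
  also have "\<dots> = ((1 + s^2) * (- (x * (1 - t^2))) + s * ((1 + t^2 * x^2) + (x^2 + t^2))) / (1 + t^2 * x^2)"
    by (rule comb[OF d])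
  also have "(1 + s^2) * (- (x * (1 - t^2))) + s * ((1 + t^2 * x^2) + (x^2 + t^2)) = s * (1 + t^2) * (1 + x^2) - (1 + s^2) * (1 - t^2) * x"
    by (simp add: algebra_simps)
  finally show ?thesis .
qed

lemma PL_rot_Lp2: "PL s (\<i> * Lp t x) = (s * (1 + t^2) * (1 + x^2) + (1 + s^2) * (1 - t^2) * x) / (1 + t^2 * x^2)"
proof -
  have d: "1 + t^2 * x^2 \<noteq> 0" using Dpos[of t x] by simp
  have n: "cmod (\<i> * Lp t x) = cmod (Lp t x)" by (simp add: norm_mult)
  have "PL s (\<i> * Lp t x) = (1 + s^2) * (x * (1 - t^2) / (1 + t^2 * x^2)) + s * (1 + (x^2 + t^2) / (1 + t^2 * x^2))"
    unfolding PL_def n Lp_norm2 by (simp add: Lp_explicit)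
  also have "\<dots> = ((1 + s^2) * (x * (1 - t^2)) + s * ((1 + t^2 * x^2) + (x^2 + t^2))) / (1 + t^2 * x^2)"
    by (rule comb[OF d])
  also have "(1 + s^2) * (x * (1 - t^2)) + s * ((1 + t^2 * x^2) + (x^2 + t^2)) = s * (1 + t^2) * (1 + x^2) + (1 + s^2) * (1 - t^2) * x"
    by (simp add: algebra_simps)
  finally show ?thesis .
qed

lemma quad_root: fixes A B x \<sigma> :: real
  assumes "A > 0" "0 < \<sigma>" "\<sigma> < 1" "\<bar>x\<bar> < 1" "B * \<sigma> = A * (1 + \<sigma>^2)"
    and "A * (1 + x^2) - B * x \<ge> 0"
  shows "x \<le> \<sigma>"
proof (rule ccontr)
  assume "\<not> x \<le> \<sigma>"
  hence xs: "x - \<sigma> > 0" by simp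
  have "x * \<sigma> < 1" using assms by (smt (verit) mult_less_cancel_left1 mult_less_cancel_right1 abs_less_iff mult_pos_pos)
  hence "(x - \<sigma>) * (x * \<sigma> - 1) < 0" using xs by (simp add: mult_pos_neg)
  moreover have "(A * (1 + x^2) - B * x) * \<sigma> = A * ((x - \<sigma>) * (x * \<sigma> - 1))"
  proof -
    have "(A * (1 + x^2) - B * x) * \<sigma> = A * (1 + x^2) * \<sigma> - (B * \<sigma>) * x" by (simp add: algebra_simps)
    also have "\<dots> = A * ((x - \<sigma>) * (x * \<sigma> - 1))" unfolding assms(5) by (simp add: algebra_simps power2_eq_square)
    finally show ?thesis .
  qed
  moreover have "(A * (1 + x^2) - B * x) * \<sigma> \<ge> 0" using assms by simp
  ultimately show False using mult_pos_neg[OF assms(1)] by fastforce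
qed

definition Lset :: "real \<Rightarrow> real \<Rightarrow> complex set" where
  "Lset a b = (\<lambda>x. Lp (tp a b) x) ` {- sg a b..sg a b}"

lemma lower_eq: assumes "a > 0" "b > 0" "a^2 + b^2 < 1"
  shows "lower_side a b = Lset a b"
proof -
  have c: "cmod (Complex 0 (tp a b)) < 1" using tp_props[OF assms] by (simp add: cmod_def)
  show ?thesis unfolding lower_side_def corner(3,4)[OF assms] Lset_def Lp_def
    by (rule seg_char[OF c corner(1,2)[OF assms]])
qed

lemma lower_hmid: assumes "a > 0" "b > 0" "a^2 + b^2 < 1"
  shows "hmid (Complex a (-b)) (Complex (-a) (-b)) = Complex 0 (- tp a b)"
proof -
  have c: "cmod (Complex 0 (tp a b)) < 1" using tp_props[OF assms] by (simp add: cmod_def)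
  have "hmid (Complex a (-b)) (Complex (-a) (-b)) = mob (Complex 0 (tp a b)) 0"
    unfolding corner(3,4)[OF assms] by (rule seg_hmid[OF c corner(1,2)[OF assms]])
  thus ?thesis by (simp add: mob_def complex_eq_iff)
qed

lemma frontier_L: assumes ab: "a > 0" "b > 0" "a^2 + b^2 < 1"
  and z: "cmod z < 1" "PL (tp a b) z = 0" "PL (tp b a) (- \<i> * z) \<ge> 0" "PL (tp b a) (\<i> * z) \<ge> 0"
  shows "z \<in> Lset a b"
proof -
  define t where "t = tp a b"
  define s where "s = tp b a"
  define \<sigma> where "\<sigma> = sg a b"
  have ba: "b > 0" "a > 0" "b^2 + a^2 < 1" using ab by auto
  have t: "0 < t" "t < 1" "b * (1 + t^2) = (1 + a^2 + b^2) * t" using tp_props[OF ab] by (simp_all add: t_def)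
  have s: "0 < s" "s < 1" "a * (1 + s^2) = (1 + b^2 + a^2) * s" using tp_props[OF ba] by (simp_all add: s_def)
  have sg: "0 < \<sigma>" "\<sigma> < 1" "Complex a (-b) = Lp t \<sigma>"
    using corner[OF ab] by (simp_all add: \<sigma>_def t_def Lp_def)
  have wc: "cmod (Complex 0 (-t)) < 1" "cmod (Complex 0 t) < 1" using t by (simp_all add: cmod_def)
  define w where "w = mob (Complex 0 (-t)) z"
  have "Im w = 0" using Im_mob_PL[of t z] z(2) by (simp add: w_def t_def)
  hence wr: "w = of_real (Re w)" by (simp add: complex_eq_iff)
  have "cmod w < 1" using mob_disc[OF wc(1) z(1)] by (simp add: w_def)
  hence xa: "\<bar>Re w\<bar> < 1" by (metis wr norm_of_real)
  have "z = mob (- Complex 0 (-t)) w" using mob_inv[OF wc(1) less_imp_le[OF z(1)]] by (simp add: w_def)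
  moreover have "- Complex 0 (-t) = Complex 0 t" by (simp add: complex_eq_iff)
  ultimately have zx: "z = Lp t (Re w)" using wr by (simp add: Lp_def)
  define A where "A = s * (1 + t^2)"
  define B where "B = (1 + s^2) * (1 - t^2)"
  have A: "A > 0" using s t by (simp add: A_def add_pos_nonneg)
  have "PL s (- \<i> * Lp t \<sigma>) = 0"
  proof -
    have "- \<i> * Lp t \<sigma> = Complex (-b) (-a)" using sg(3)[symmetric] by (simp add: complex_eq_iff)
    thus ?thesis using s(3) by (simp add: PL_def cmod_def algebra_simps)
  qed
  hence "A * (1 + \<sigma>^2) - B * \<sigma> = 0" unfolding PL_rot_Lp1 A_def B_def using Dpos[of t \<sigma>] by simp
  hence rel: "B * \<sigma> = A * (1 + \<sigma>^2)" by simp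
  have q1: "A * (1 + (Re w)^2) - B * (Re w) \<ge> 0"
    using z(3) unfolding zx PL_rot_Lp1 A_def B_def s_def[symmetric] using Dpos[of t "Re w"]
    by (simp add: zero_le_divide_iff)
  have q2: "A * (1 + (- Re w)^2) - B * (- Re w) \<ge> 0"
    using z(4) unfolding zx PL_rot_Lp2 A_def B_def s_def[symmetric] using Dpos[of t "Re w"]
    by (simp add: zero_le_divide_iff)
  have "Re w \<le> \<sigma>" by (rule quad_root[OF A sg(1,2) xa rel q1])
  moreover have "- Re w \<le> \<sigma>" using xa by (intro quad_root[OF A sg(1,2) _ rel q2]) simp
  ultimately show ?thesis unfolding Lset_def zx t_def[symmetric] \<sigma>_def[symmetric] by auto
qed



lemma corners_disc: assumes "a^2 + b^2 < 1"
  shows "Complex a b \<in> pdisc" "Complex (-a) b \<in> pdisc" "Complex a (-b) \<in> pdisc" "Complex (-a) (-b) \<in> pdisc"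
    "Complex b a \<in> pdisc" "Complex (-b) a \<in> pdisc" "Complex b (-a) \<in> pdisc" "Complex (-b) (-a) \<in> pdisc"
proof -
  have "sqrt (a^2 + b^2) < 1" using assms by (metis real_sqrt_less_mono real_sqrt_one)
  thus "Complex a b \<in> pdisc" "Complex (-a) b \<in> pdisc" "Complex a (-b) \<in> pdisc" "Complex (-a) (-b) \<in> pdisc"
    "Complex b a \<in> pdisc" "Complex (-b) a \<in> pdisc" "Complex b (-a) \<in> pdisc" "Complex (-b) (-a) \<in> pdisc"
    by (simp_all add: pdisc_def cmod_def add.commute)
qed

lemma upper_eq: assumes "a > 0" "b > 0" "a^2 + b^2 < 1"
  shows "upper_side a b = uminus ` Lset a b"
proof -
  have r: "cmod (-1 :: complex) = 1" by simp
  have "geoseg ((-1) * Complex (-a) (-b)) ((-1) * Complex a (-b)) = (\<lambda>z. (-1) * z) ` geoseg (Complex (-a) (-b)) (Complex a (-b))"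
    using corners_disc[OF assms(3)] by (intro geoseg_rot[OF r]) auto
  moreover have "(-1) * Complex (-a) (-b) = Complex a b" "(-1) * Complex a (-b) = Complex (-a) b" by (simp_all add: complex_eq_iff)
  moreover have "geoseg (Complex (-a) (-b)) (Complex a (-b)) = Lset a b"
    using lower_eq[OF assms] geoseg_sym by (simp add: lower_side_def)
  moreover have "(\<lambda>z::complex. (-1) * z) = uminus" by auto
  ultimately show ?thesis by (simp add: upper_side_def)
qed

lemma right_eq: assumes "a > 0" "b > 0" "a^2 + b^2 < 1"
  shows "right_side a b = (\<lambda>z. \<i> * z) ` Lset b a"
proof -
  have ba: "b > 0" "a > 0" "b^2 + a^2 < 1" using assms by auto
  have r: "cmod \<i> = 1" by simp
  have "geoseg (\<i> * Complex (-b) (-a)) (\<i> * Complex b (-a)) = (\<lambda>z. \<i> * z) ` geoseg (Complex (-b) (-a)) (Complex b (-a))"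
    using corners_disc[OF assms(3)] by (intro geoseg_rot[OF r]) auto
  moreover have "\<i> * Complex (-b) (-a) = Complex a (-b)" "\<i> * Complex b (-a) = Complex a b" by (simp_all add: complex_eq_iff)
  moreover have "geoseg (Complex (-b) (-a)) (Complex b (-a)) = Lset b a"
    using lower_eq[OF ba] geoseg_sym by (simp add: lower_side_def)
  ultimately show ?thesis by (simp add: right_side_def)
qed

lemma left_eq: assumes "a > 0" "b > 0" "a^2 + b^2 < 1"
  shows "left_side a b = (\<lambda>z. - \<i> * z) ` Lset b a"
proof -
  have ba: "b > 0" "a > 0" "b^2 + a^2 < 1" using assms by auto
  have r: "cmod (- \<i>) = 1" by simp
  have "geoseg (- \<i> * Complex b (-a)) (- \<i> * Complex (-b) (-a)) = (\<lambda>z. - \<i> * z) ` geoseg (Complex b (-a)) (Complex (-b) (-a))"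
    using corners_disc[OF assms(3)] by (intro geoseg_rot[OF r]) auto
  moreover have "- \<i> * Complex b (-a) = Complex (-a) (-b)" "- \<i> * Complex (-b) (-a) = Complex (-a) b" by (simp_all add: complex_eq_iff)
  moreover have "geoseg (Complex b (-a)) (Complex (-b) (-a)) = Lset b a"
    using lower_eq[OF ba] by (simp add: lower_side_def)
  ultimately show ?thesis by (simp add: left_side_def)
qed

definition Dq :: "real \<Rightarrow> real \<Rightarrow> complex set" where
  "Dq a b = {z. cmod z < 1 \<and> PL (tp a b) z > 0 \<and> PL (tp a b) (-z) > 0 \<and> PL (tp b a) (- \<i> * z) > 0 \<and> PL (tp b a) (\<i> * z) > 0}"

definition Dc :: "real \<Rightarrow> real \<Rightarrow> complex set" where
  "Dc a b = {z. cmod z \<le> 1 \<and> PL (tp a b) z \<ge> 0 \<and> PL (tp a b) (-z) \<ge> 0 \<and> PL (tp b a) (- \<i> * z) \<ge> 0 \<and> PL (tp b a) (\<i> * z) \<ge> 0}"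

lemma PL_cont: "continuous_on UNIV (\<lambda>z. PL t (c * z))"
  unfolding PL_def by (intro continuous_intros)

lemma Dq_open: "open (Dq a b)"
proof -
  have "Dq a b = {z. cmod z < 1} \<inter> {z. 0 < PL (tp a b) (1 * z)} \<inter> {z. 0 < PL (tp a b) ((-1) * z)}
     \<inter> {z. 0 < PL (tp b a) (- \<i> * z)} \<inter> {z. 0 < PL (tp b a) (\<i> * z)}"
    by (auto simp: Dq_def)
  moreover have "open {z. cmod z < 1}" by (intro open_Collect_less continuous_intros)
  moreover have "\<And>t c. open {z. 0 < PL t (c * z)}"
    by (intro open_Collect_less continuous_intros PL_cont)
  ultimately show ?thesis by (metis open_Int)
qed

lemma Dc_closed: "closed (Dc a b)"
proof -
  have "Dc a b = {z. cmod z \<le> 1} \<inter> {z. 0 \<le> PL (tp a b) (1 * z)} \<inter> {z. 0 \<le> PL (tp a b) ((-1) * z)}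
     \<inter> {z. 0 \<le> PL (tp b a) (- \<i> * z)} \<inter> {z. 0 \<le> PL (tp b a) (\<i> * z)}"
    by (auto simp: Dc_def)
  moreover have "closed {z. cmod z \<le> 1}" by (intro closed_Collect_le continuous_intros)
  moreover have "\<And>t c. closed {z. 0 \<le> PL t (c * z)}"
    by (intro closed_Collect_le continuous_intros PL_cont)
  ultimately show ?thesis by (metis closed_Int)
qed

lemma Dq_sub_Dc: "Dq a b \<subseteq> Dc a b"
  by (auto simp: Dq_def Dc_def)

lemma Lset_PL: "z \<in> Lset a b \<Longrightarrow> PL (tp a b) z = 0"
  by (auto simp: Lset_def PL_Lp)

lemma rot_simps: "- \<i> * (- \<i> * z) = - z" "\<i> * (- \<i> * z) = z" "- \<i> * (\<i> * z) = z" "\<i> * (\<i> * z) = - z"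
  "- \<i> * (- z) = \<i> * z" "\<i> * (- z) = - \<i> * z"
  by (simp_all add: complex_eq_iff)

lemma quad_boundary_eq: assumes "a > 0" "b > 0" "a^2 + b^2 < 1"
  shows "quad_boundary a b = uminus ` Lset a b \<union> Lset a b \<union> (\<lambda>z. - \<i> * z) ` Lset b a \<union> (\<lambda>z. \<i> * z) ` Lset b a"
  unfolding quad_boundary_def upper_eq[OF assms] lower_eq[OF assms] left_eq[OF assms] right_eq[OF assms] ..

lemma Dq_disjoint: assumes "a > 0" "b > 0" "a^2 + b^2 < 1"
  shows "Dq a b \<inter> quad_boundary a b = {}"
proof -
  { fix z assume z: "z \<in> Dq a b" "z \<in> quad_boundary a b"
    have False
    proof -
      from z(2) consider "z \<in> uminus ` Lset a b" | "z \<in> Lset a b" | "z \<in> (\<lambda>z. - \<i> * z) ` Lset b a" | "z \<in> (\<lambda>z. \<i> * z) ` Lset b a"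
        unfolding quad_boundary_eq[OF assms] by blast
      thus False
      proof cases
        case 1 then obtain w where "w \<in> Lset a b" "z = - w" by blast
        thus False using z(1) Lset_PL by (auto simp: Dq_def)
      next
        case 2 thus False using z(1) Lset_PL by (auto simp: Dq_def)
      next
        case 3 then obtain w where "w \<in> Lset b a" "z = - \<i> * w" by blast
        thus False using z(1) Lset_PL[of w b a] by (auto simp: Dq_def rot_simps)
      next
        case 4 then obtain w where "w \<in> Lset b a" "z = \<i> * w" by blast
        thus False using z(1) Lset_PL[of w b a] by (auto simp: Dq_def rot_simps)
      qed
    qed }
  thus ?thesis by blast
qed

lemma frontier_Dq: assumes ab: "a > 0" "b > 0" "a^2 + b^2 < 1"
  shows "frontier (Dq a b) \<subseteq> quad_boundary a b"
proof
  fix z assume "z \<in> frontier (Dq a b)"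
  hence zc: "z \<in> Dc a b" and zn: "z \<notin> Dq a b"
    using closure_minimal[OF Dq_sub_Dc Dc_closed] interior_open[OF Dq_open]
    by (auto simp: frontier_def)
  have ba: "b > 0" "a > 0" "b^2 + a^2 < 1" using ab by auto
  define t where "t = tp a b"
  define s where "s = tp b a"
  have t: "0 < t" "b * (1 + t^2) = (1 + a^2 + b^2) * t" using tp_props[OF ab] by (simp_all add: t_def)
  have s: "0 < s" "a * (1 + s^2) = (1 + b^2 + a^2) * s" using tp_props[OF ba] by (simp_all add: s_def)
  have P: "PL t z \<ge> 0" "PL t (-z) \<ge> 0" "PL s (- \<i> * z) \<ge> 0" "PL s (\<i> * z) \<ge> 0" "cmod z \<le> 1"
    using zc by (auto simp: Dc_def t_def s_def)
  have z1: "cmod z < 1"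
  proof (rule ccontr)
    assume "\<not> cmod z < 1"
    hence n1: "cmod z = 1" using P(5) by simp
    have cm: "(cmod (-z))^2 = 1" "(cmod (- \<i> * z))^2 = 1" "(cmod (\<i> * z))^2 = 1" using n1 by (simp_all add: norm_mult)
    have y1: "(1 + t^2) * Im z + 2 * t \<ge> 0" using P(1) n1 unfolding PL_def by (simp add: algebra_simps)
    have y2: "- (1 + t^2) * Im z + 2 * t \<ge> 0" using P(2) cm unfolding PL_def by (simp add: algebra_simps)
    have x1: "- (1 + s^2) * Re z + 2 * s \<ge> 0" using P(3) cm unfolding PL_def by (simp add: algebra_simps)
    have x2: "(1 + s^2) * Re z + 2 * s \<ge> 0" using P(4) cm unfolding PL_def by (simp add: algebra_simps)
    define K where "K = 1 + a^2 + b^2"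
    have "(1 + t^2) * \<bar>Im z\<bar> \<le> 2 * t"
    proof -
      have e: "(1 + t^2) * \<bar>Im z\<bar> = \<bar>(1 + t^2) * Im z\<bar>" by (simp add: abs_mult)
      have "(1 + t^2) * Im z \<le> 2 * t" using y2 by (simp add: algebra_simps)
      thus ?thesis unfolding e using y1 by linarith
    qed
    hence "b * ((1 + t^2) * \<bar>Im z\<bar>) \<le> b * (2 * t)" using ab by simp
    moreover have "b * ((1 + t^2) * \<bar>Im z\<bar>) = t * (K * \<bar>Im z\<bar>)"
    proof -
      have "b * ((1 + t^2) * \<bar>Im z\<bar>) = (b * (1 + t^2)) * \<bar>Im z\<bar>" by (simp only: mult.assoc)
      also have "\<dots> = ((1 + a^2 + b^2) * t) * \<bar>Im z\<bar>" by (simp only: t(2))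
      finally show ?thesis by (simp add: K_def algebra_simps)
    qed
    ultimately have "t * (K * \<bar>Im z\<bar>) \<le> t * (2 * b)" by (simp add: algebra_simps)
    hence ky: "K * \<bar>Im z\<bar> \<le> 2 * b" using t(1) by simp
    have "(1 + s^2) * \<bar>Re z\<bar> \<le> 2 * s"
    proof -
      have e: "(1 + s^2) * \<bar>Re z\<bar> = \<bar>(1 + s^2) * Re z\<bar>" by (simp add: abs_mult)
      have "(1 + s^2) * Re z \<le> 2 * s" using x1 by (simp add: algebra_simps)
      thus ?thesis unfolding e using x2 by linarith
    qed
    hence "a * ((1 + s^2) * \<bar>Re z\<bar>) \<le> a * (2 * s)" using ab by simp
    moreover have "a * ((1 + s^2) * \<bar>Re z\<bar>) = s * (K * \<bar>Re z\<bar>)"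
    proof -
      have "a * ((1 + s^2) * \<bar>Re z\<bar>) = (a * (1 + s^2)) * \<bar>Re z\<bar>" by (simp only: mult.assoc)
      also have "\<dots> = ((1 + b^2 + a^2) * s) * \<bar>Re z\<bar>" by (simp only: s(2))
      finally show ?thesis by (simp add: K_def algebra_simps)
    qed
    ultimately have "s * (K * \<bar>Re z\<bar>) \<le> s * (2 * a)" by (simp add: algebra_simps)
    hence kx: "K * \<bar>Re z\<bar> \<le> 2 * a" using s(1) by simp
    have "(K * \<bar>Im z\<bar>)^2 \<le> (2*b)^2" using ky by (intro power_mono) (auto simp: K_def)
    moreover have "(K * \<bar>Re z\<bar>)^2 \<le> (2*a)^2" using kx by (intro power_mono) (auto simp: K_def)
    ultimately have "K^2 * ((Re z)^2 + (Im z)^2) \<le> 4 * (a^2 + b^2)"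
      by (simp add: power_mult_distrib algebra_simps)
    moreover have "(Re z)^2 + (Im z)^2 = 1" using n1 by (simp add: cmod_power2[symmetric])
    moreover have "4 * (a^2 + b^2) < K^2"
    proof -
      have "(1 - (a^2 + b^2))^2 > 0" using ab by simp
      thus ?thesis by (simp add: K_def power2_eq_square algebra_simps)
    qed
    ultimately show False by simp
  qed
  have "PL t z = 0 \<or> PL t (-z) = 0 \<or> PL s (- \<i> * z) = 0 \<or> PL s (\<i> * z) = 0"
    using zn z1 P by (auto simp: Dq_def t_def s_def)
  moreover
  { assume "PL t z = 0"
    hence "z \<in> Lset a b" using frontier_L[OF ab z1] P by (simp add: t_def s_def) }
  moreover
  { assume "PL t (-z) = 0"
    hence "-z \<in> Lset a b" using frontier_L[OF ab, of "-z"] z1 P by (simp add: t_def s_def rot_simps)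
    hence "z \<in> uminus ` Lset a b" by (metis image_eqI minus_minus) }
  moreover
  { assume "PL s (- \<i> * z) = 0"
    hence "- \<i> * z \<in> Lset b a" using frontier_L[OF ba, of "- \<i> * z"] z1 P by (simp add: t_def s_def rot_simps norm_mult)
    hence "z \<in> (\<lambda>z. \<i> * z) ` Lset b a" by (metis image_eqI rot_simps(2)) }
  moreover
  { assume "PL s (\<i> * z) = 0"
    hence "\<i> * z \<in> Lset b a" using frontier_L[OF ba, of "\<i> * z"] z1 P by (simp add: t_def s_def rot_simps norm_mult)
    hence "z \<in> (\<lambda>z. - \<i> * z) ` Lset b a" by (metis image_eqI rot_simps(3)) }
  ultimately show "z \<in> quad_boundary a b" unfolding quad_boundary_eq[OF ab] by blast
qed

lemma Dq_inside: assumes ab: "a > 0" "b > 0" "a^2 + b^2 < 1" and z: "z \<in> Dq a b"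
  shows "z \<in> inside (quad_boundary a b)"
proof -
  let ?S = "quad_boundary a b"
  let ?C = "connected_component_set (- ?S) z"
  have zS: "z \<notin> ?S" using Dq_disjoint[OF ab] z by blast
  have "?C \<subseteq> Dq a b"
  proof (rule ccontr)
    assume "\<not> ?C \<subseteq> Dq a b"
    hence "?C - Dq a b \<noteq> {}" by blast
    moreover have "?C \<inter> Dq a b \<noteq> {}"
    proof -
      have "z \<in> ?C" using zS by (simp add: connected_component_refl_eq)
      thus ?thesis using z by blast
    qed
    ultimately have "?C \<inter> frontier (Dq a b) \<noteq> {}"
      using connected_Int_frontier[OF connected_connected_component] by blast
    moreover have "?C \<subseteq> - ?S" by (rule connected_component_subset)
    ultimately show False using frontier_Dq[OF ab] by blast
  qed
  moreover have "bounded (Dq a b)"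
    by (rule bounded_subset[of "ball 0 1"]) (auto simp: Dq_def)
  ultimately have "bounded ?C" using bounded_subset by blast
  thus ?thesis using zS by (simp add: inside_def)
qed

lemma sides_disc: "geoseg u v \<subseteq> pdisc"
  by (auto simp: geoseg_def)

lemma quad_disc: "quad a b \<subseteq> pdisc"
proof -
  let ?S = "quad_boundary a b"
  have S: "?S \<subseteq> ball 0 1"
    using sides_disc unfolding quad_boundary_def upper_side_def lower_side_def left_side_def right_side_def pdisc_def
    by (auto simp: subset_iff)
  have c: "connected (- ball (0::complex) 1)"
    by (rule connected_complement_bounded_convex) auto
  have u: "\<not> bounded (- ball (0::complex) 1)"
    by (metis bounded_ball cobounded_imp_unbounded double_complement)
  have "inside ?S \<subseteq> ball 0 1 - ?S"
    by (rule inside_subset[OF c u]) (use S in auto)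
  thus ?thesis using S unfolding quad_def pdisc_def by auto
qed



lemma combo: fixes P1 P2 R1 R2 Q D1 D2 :: real
  assumes "D1 \<noteq> 0" "D2 \<noteq> 0" "R1 \<noteq> 0" "R2 \<noteq> 0"
  shows "((P1 / D1) * (P2 / D2) - 4 * (- (Q / (D1 * D2)))) / ((R1 / D1) * (R2 / D2)) = (P1 * P2 + 4 * Q) / (R1 * R2)"
  using assms by (simp add: field_simps)

lemma F_formula: assumes "\<bar>t\<bar> < 1" "\<bar>u\<bar> < 1" "\<bar>v\<bar> < 1"
  shows "1 + pp (Lp t u) (- Lp t v) =
    ((1 + 6 * t^2 + t^4) * (1 + u^2) * (1 + v^2) + 4 * u * v * (1 - t^2)^2) / ((1 - t^2)^2 * (1 - u^2) * (1 - v^2))"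
proof -
  have D: "1 + t^2 * u^2 \<noteq> 0" "1 + t^2 * v^2 \<noteq> 0" using Dpos[of t u] Dpos[of t v] by auto
  have sq: "t^2 < 1" "u^2 < 1" "v^2 < 1" using assms by (simp_all add: abs_square_less_1)
  have R: "(1 - t^2) * (1 - u^2) \<noteq> 0" "(1 - t^2) * (1 - v^2) \<noteq> 0" using sq by auto
  have n: "\<And>w. 1 + (cmod (Lp t w))^2 = (1 + t^2) * (1 + w^2) / (1 + t^2 * w^2)"
  proof -
    fix w
    have "1 + t^2 * w^2 \<noteq> 0" using Dpos[of t w] by auto
    thus "1 + (cmod (Lp t w))^2 = (1 + t^2) * (1 + w^2) / (1 + t^2 * w^2)"
      unfolding Lp_norm2 by (simp add: field_simps)
  qed
  have m: "\<And>w. 1 - (cmod (Lp t w))^2 = (1 - t^2) * (1 - w^2) / (1 + t^2 * w^2)"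
  proof -
    fix w
    have "1 + t^2 * w^2 \<noteq> 0" using Dpos[of t w] by auto
    thus "1 - (cmod (Lp t w))^2 = (1 - t^2) * (1 - w^2) / (1 + t^2 * w^2)"
      unfolding Lp_norm2 by (simp add: field_simps)
  qed
  have ip: "Re (Lp t u) * Re (- Lp t v) + Im (Lp t u) * Im (- Lp t v) =
     - ((u * v * (1 - t^2)^2 + t^2 * (1 + u^2) * (1 + v^2)) / ((1 + t^2 * u^2) * (1 + t^2 * v^2)))"
  proof -
    have r: "\<And>w. Re (Lp t w) = w * (1 - t^2) / (1 + t^2 * w^2)" "\<And>w. Im (Lp t w) = - t * (1 + w^2) / (1 + t^2 * w^2)"
      by (simp_all add: Lp_explicit)
    have g: "\<And>p q r s D1 D2. (D1::real) \<noteq> 0 \<Longrightarrow> D2 \<noteq> 0 \<Longrightarrow> p / D1 * (- (q / D2)) + r / D1 * (- (s / D2)) = - ((p * q + r * s) / (D1 * D2))"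
      by (simp add: field_simps)
    have "Re (Lp t u) * Re (- Lp t v) + Im (Lp t u) * Im (- Lp t v) =
      u * (1 - t^2) / (1 + t^2 * u^2) * (- (v * (1 - t^2) / (1 + t^2 * v^2))) + (- t * (1 + u^2) / (1 + t^2 * u^2)) * (- (- t * (1 + v^2) / (1 + t^2 * v^2)))"
      by (simp only: r uminus_complex.sel)
    also have "\<dots> = - ((u * (1 - t^2) * (v * (1 - t^2)) + (- t * (1 + u^2)) * (- t * (1 + v^2))) / ((1 + t^2 * u^2) * (1 + t^2 * v^2)))"
      by (rule g[OF D])
    also have "u * (1 - t^2) * (v * (1 - t^2)) + (- t * (1 + u^2)) * (- t * (1 + v^2)) = u * v * (1 - t^2)^2 + t^2 * (1 + u^2) * (1 + v^2)"
      by (simp add: power2_eq_square algebra_simps)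
    finally show ?thesis .
  qed
  have cu: "cmod (Lp t u) < 1" "cmod (- Lp t v) < 1"
    using mob_disc[of "Complex 0 t"] assms by (auto simp: Lp_def cmod_def abs_square_less_1)
  have "1 + pp (Lp t u) (- Lp t v) = ((1 + (cmod (Lp t u))^2) * (1 + (cmod (Lp t v))^2) - 4 * (Re (Lp t u) * Re (- Lp t v) + Im (Lp t u) * Im (- Lp t v))) /
      ((1 - (cmod (Lp t u))^2) * (1 - (cmod (Lp t v))^2))"
    using pp_alt[OF cu] by simp
  also have "\<dots> = (((1 + t^2) * (1 + u^2)) * ((1 + t^2) * (1 + v^2)) + 4 * (u * v * (1 - t^2)^2 + t^2 * (1 + u^2) * (1 + v^2))) /
      (((1 - t^2) * (1 - u^2)) * ((1 - t^2) * (1 - v^2)))"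
    unfolding n m ip by (rule combo[OF D R])
  also have "\<dots> = ((1 + 6 * t^2 + t^4) * (1 + u^2) * (1 + v^2) + 4 * u * v * (1 - t^2)^2) / ((1 - t^2)^2 * (1 - u^2) * (1 - v^2))"
  proof -
    have eq1: "((1 + t^2) * (1 + u^2)) * ((1 + t^2) * (1 + v^2)) + 4 * (u * v * (1 - t^2)^2 + t^2 * (1 + u^2) * (1 + v^2))
      = (1 + 6 * t^2 + t^4) * (1 + u^2) * (1 + v^2) + 4 * u * v * (1 - t^2)^2"
      by (simp add: power2_eq_square power4_eq_xxxx algebra_simps)
    have eq2: "((1 - t^2) * (1 - u^2)) * ((1 - t^2) * (1 - v^2)) = (1 - t^2)^2 * (1 - u^2) * (1 - v^2)"
      by (simp add: power2_eq_square algebra_simps)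
    show ?thesis by (simp only: eq1 eq2)
  qed
  finally show ?thesis .
qed

lemma Lp0: "Lp t 0 = Complex 0 (-t)" by (simp add: Lp_explicit)

lemma F_ineq: assumes "0 < t" "t < 1" "\<bar>u\<bar> < 1" "\<bar>v\<bar> < 1"
  shows "1 + pp (Lp t u) (- Lp t v) \<ge> 1 + pp (Lp t 0) (- Lp t 0)"
    and "(u \<noteq> 0 \<or> v \<noteq> 0) \<Longrightarrow> 1 + pp (Lp t u) (- Lp t v) > 1 + pp (Lp t 0) (- Lp t 0)"
proof -
  have ta: "\<bar>t\<bar> < 1" "\<bar>0::real\<bar> < 1" using assms by auto
  define C where "C = 1 + 6 * t^2 + t^4"
  define E where "E = (1 - t^2)^2"
  have sq: "t^2 < 1" "u^2 < 1" "v^2 < 1" using assms by (simp_all add: abs_square_less_1)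
  have E0: "E > 0" using sq by (simp add: E_def)
  have CE: "C - E = 8 * t^2" by (simp add: C_def E_def power2_eq_square power4_eq_xxxx algebra_simps)
  have t2: "t^2 > 0" using assms by simp
  have f0: "1 + pp (Lp t 0) (- Lp t 0) = C / E"
    using F_formula[OF ta(1) ta(2) ta(2)] sq by (simp add: C_def E_def)
  have f: "1 + pp (Lp t u) (- Lp t v) = (C * (1 + u^2) * (1 + v^2) + 4 * u * v * E) / (E * (1 - u^2) * (1 - v^2))"
    using F_formula[OF ta(1) assms(3,4)] by (simp add: C_def E_def)
  have den: "E * (1 - u^2) * (1 - v^2) > 0" using E0 sq by simp
  have key: "C * (1 + u^2) * (1 + v^2) + 4 * u * v * E - C * (1 - u^2) * (1 - v^2) = 2 * (C - E) * (u^2 + v^2) + E * (2 * (u + v)^2)"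
    by (simp add: power2_eq_square algebra_simps)
  have cE: "C / E = C * (1 - u^2) * (1 - v^2) / (E * (1 - u^2) * (1 - v^2))"
  proof -
    have nz: "(1 - u^2) * (1 - v^2) \<noteq> 0" using sq by simp
    have "C * (1 - u^2) * (1 - v^2) / (E * (1 - u^2) * (1 - v^2)) = (C * ((1 - u^2) * (1 - v^2))) / (E * ((1 - u^2) * (1 - v^2)))"
      by (simp only: mult.assoc)
    also have "\<dots> = C / E" by (rule nonzero_mult_divide_mult_cancel_right[OF nz])
    finally show ?thesis by simp
  qed
  show "1 + pp (Lp t u) (- Lp t v) \<ge> 1 + pp (Lp t 0) (- Lp t 0)"
  proof -
    have "C * (1 - u^2) * (1 - v^2) \<le> C * (1 + u^2) * (1 + v^2) + 4 * u * v * E"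
      using key CE E0 t2 by (smt (verit) mult_nonneg_nonneg zero_le_power2)
    hence "C * (1 - u^2) * (1 - v^2) / (E * (1 - u^2) * (1 - v^2)) \<le> (C * (1 + u^2) * (1 + v^2) + 4 * u * v * E) / (E * (1 - u^2) * (1 - v^2))"
      using den by (intro divide_right_mono) auto
    thus ?thesis unfolding f0 cE f .
  qed
  assume "u \<noteq> 0 \<or> v \<noteq> 0"
  hence "u^2 + v^2 > 0" by (metis add_nonneg_pos add_pos_nonneg zero_le_power2 zero_less_power2)
  hence "C * (1 - u^2) * (1 - v^2) < C * (1 + u^2) * (1 + v^2) + 4 * u * v * E"
    using key CE E0 t2 by (smt (verit) mult_pos_pos mult_nonneg_nonneg zero_le_power2)
  hence "C * (1 - u^2) * (1 - v^2) / (E * (1 - u^2) * (1 - v^2)) < (C * (1 + u^2) * (1 + v^2) + 4 * u * v * E) / (E * (1 - u^2) * (1 - v^2))"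
    using den by (intro divide_strict_right_mono) auto
  thus "1 + pp (Lp t u) (- Lp t v) > 1 + pp (Lp t 0) (- Lp t 0)" unfolding f0 cE f .
qed

lemma LU_dist: assumes ab: "a > 0" "b > 0" "a^2 + b^2 < 1"
  and x: "x \<in> Lset a b" and y: "y \<in> uminus ` Lset a b"
  shows "pdist x y \<ge> pdist (Complex 0 (- tp a b)) (Complex 0 (tp a b))"
    and "pdist x y \<le> pdist (Complex 0 (- tp a b)) (Complex 0 (tp a b)) \<Longrightarrow> x = Complex 0 (- tp a b) \<and> y = Complex 0 (tp a b)"
proof -
  define t where "t = tp a b"
  have t: "0 < t" "t < 1" using tp_props[OF ab] by (simp_all add: t_def)
  have sg: "0 < sg a b" "sg a b < 1" using corner[OF ab] by auto
  obtain u where u: "u \<in> {-sg a b..sg a b}" "x = Lp t u" using x by (auto simp: Lset_def t_def)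
  obtain v where v: "v \<in> {-sg a b..sg a b}" "y = - Lp t v" using y by (auto simp: Lset_def t_def)
  have ua: "\<bar>u\<bar> < 1" "\<bar>v\<bar> < 1" using u v sg by auto
  have e0: "Complex 0 (-t) = Lp t 0" "Complex 0 t = - Lp t 0" by (simp_all add: Lp0 complex_eq_iff)
  have pn: "pp (Lp t 0) (- Lp t 0) \<ge> 0"
    unfolding e0[symmetric] using t by (intro pp_nonneg) (auto simp: cmod_def)
  show "pdist x y \<ge> pdist (Complex 0 (- tp a b)) (Complex 0 (tp a b))"
    unfolding t_def[symmetric] e0 u v pdist_def using F_ineq(1)[OF t ua] pn by (intro arcosh_mono) auto
  assume le: "pdist x y \<le> pdist (Complex 0 (- tp a b)) (Complex 0 (tp a b))"
  have "u = 0 \<and> v = 0"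
  proof (rule ccontr)
    assume "\<not> (u = 0 \<and> v = 0)"
    hence "1 + pp (Lp t u) (- Lp t v) > 1 + pp (Lp t 0) (- Lp t 0)" using F_ineq(2)[OF t ua] by auto
    hence "arcosh (1 + pp (Lp t u) (- Lp t v)) > arcosh (1 + pp (Lp t 0) (- Lp t 0))"
      using pn by (subst arcosh_less_iff_real) auto
    thus False using le unfolding t_def[symmetric] e0 u v pdist_def by simp
  qed
  thus "x = Complex 0 (- tp a b) \<and> y = Complex 0 (tp a b)" using u v e0 by (simp add: t_def)
qed



lemma imag_pt: "Complex 0 y = \<i> * complex_of_real y" by (simp add: complex_eq_iff)

lemma pdist_imag: assumes "\<bar>y1\<bar> < 1" "\<bar>y2\<bar> < 1"
  shows "pdist (Complex 0 y1) (Complex 0 y2) = \<bar>H y1 - H y2\<bar>"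
  unfolding imag_pt using pdist_rot[of \<i>] pdist_real[OF assms] by simp

lemma axis_between: assumes "0 < t" "t < 1" "cmod z < 1"
  and le: "pdist (Complex 0 (-t)) z + pdist z (Complex 0 t) \<le> pdist (Complex 0 (-t)) (Complex 0 t)"
  shows "Re z = 0 \<and> -t \<le> Im z \<and> Im z \<le> t"
proof -
  have r: "cmod (- \<i>) = 1" by simp
  have e1: "- \<i> * Complex 0 (-t) = of_real (-t)" "- \<i> * Complex 0 t = of_real t" by (simp_all add: complex_eq_iff)
  have "pdist (of_real (-t)) (- \<i> * z) + pdist (- \<i> * z) (of_real t) \<le> pdist (of_real (-t)) (of_real t)"
    using le pdist_rot[OF r] unfolding e1[symmetric] by simp
  moreover have "cmod (- \<i> * z) < 1" using assms by (simp add: norm_mult)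
  ultimately have "Im (- \<i> * z) = 0 \<and> -t \<le> Re (- \<i> * z) \<and> Re (- \<i> * z) \<le> t"
    using real_between[of "-t" t "- \<i> * z"] assms by auto
  thus ?thesis by simp
qed

lemma tele: "sorted ts \<Longrightarrow> set ts \<subseteq> A \<Longrightarrow> (\<forall>x\<in>A. \<forall>y\<in>A. x \<le> y \<longrightarrow> P x y = \<Phi> y - \<Phi> x) \<Longrightarrow> ts \<noteq> []
  \<Longrightarrow> sum_list (map2 P ts (tl ts)) = \<Phi> (last ts) - (\<Phi> (hd ts) :: real)"
proof (induction ts)
  case Nil thus ?case by simp
next
  case (Cons x xs)
  show ?case
  proof (cases xs)
    case Nil thus ?thesis by simp
  next
    case (Cons y ys)
    have "sorted xs" "set xs \<subseteq> A" using Cons.prems by auto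
    hence ih: "sum_list (map2 P xs (tl xs)) = \<Phi> (last xs) - \<Phi> (hd xs)" using Cons.IH Cons.prems Cons by auto
    have "x \<le> y" "x \<in> A" "y \<in> A" using Cons.prems Cons by auto
    hence "P x y = \<Phi> y - \<Phi> x" using Cons.prems by auto
    thus ?thesis using ih Cons by simp
  qed
qed

lemma hl_upper: "sorted ts \<Longrightarrow> set ts \<subseteq> {0..1} \<Longrightarrow> ereal (sum_list (map2 (\<lambda>s t. pdist (g s) (g t)) ts (tl ts))) \<le> hlength g"
  unfolding hlength_def by (rule SUP_upper) auto

lemma hl_2: "ereal (pdist (g 0) (g 1)) \<le> hlength g"
  using hl_upper[of "[0,1]" g] by simp

lemma hl_3: "s \<in> {0..1} \<Longrightarrow> ereal (pdist (g 0) (g s) + pdist (g s) (g 1)) \<le> hlength g"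
  using hl_upper[of "[0,s,1]" g] by simp

lemma seg_imag: assumes "t > 0"
  shows "closed_segment (Complex 0 (-t)) (Complex 0 t) = (\<lambda>y. Complex 0 y) ` {-t..t}"
proof -
  have e: "Complex 0 (-t) = (-t) *\<^sub>R \<i>" "Complex 0 t = t *\<^sub>R \<i>" by (simp_all add: complex_eq_iff)
  have "closed_segment (Complex 0 (-t)) (Complex 0 t) = closed_segment ((-t) *\<^sub>R \<i>) (t *\<^sub>R \<i>)"
    by (simp only: e)
  also have "\<dots> = (\<lambda>y. y *\<^sub>R \<i>) ` closed_segment (-t) t"
  proof -
    have "linear (\<lambda>y::real. y *\<^sub>R \<i>)" by (rule linear_scaleR_left)
    from closed_segment_linear_image[OF this, of "-t" t] show ?thesis by simp
  qed
  also have "closed_segment (-t) t = {-t..t}" using assms by (simp add: closed_segment_eq_real_ivl)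
  also have "(\<lambda>y. y *\<^sub>R \<i>) = (\<lambda>y. Complex 0 y)" by (auto simp: complex_eq_iff)
  finally show ?thesis .
qed

lemma Lset_compact: assumes "a > 0" "b > 0" "a^2 + b^2 < 1" shows "compact (Lset a b)"
proof -
  have t: "0 < tp a b" "tp a b < 1" using tp_props[OF assms] by auto
  have "continuous_on {-sg a b..sg a b} (Lp (tp a b))"
  proof -
    have nz: "\<And>x. 1 + (tp a b)^2 * x^2 \<noteq> 0" using Dpos by (metis less_irrefl)
    show ?thesis unfolding Lp_explicit by (intro continuous_intros) (use nz in auto)
  qed
  thus ?thesis unfolding Lset_def by (intro compact_continuous_image) auto
qed

lemma Lset_disc: assumes "a > 0" "b > 0" "a^2 + b^2 < 1" shows "Lset a b \<subseteq> pdisc"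
  using lower_eq[OF assms] sides_disc[of "Complex a (-b)" "Complex (-a) (-b)"] by (simp add: lower_side_def)



lemma neg_Lp: "- Lp t x = mob (Complex 0 (-t)) (of_real (-x))"
  using mobL_explicit[of "-t" "-x"] by (simp add: Lp_explicit complex_eq_iff)

lemma upper_hmid: assumes ab: "a > 0" "b > 0" "a^2 + b^2 < 1"
  shows "hmid (Complex a b) (Complex (-a) b) = Complex 0 (tp a b)"
proof -
  define t where "t = tp a b"
  have c: "cmod (Complex 0 (-t)) < 1" using tp_props[OF ab] by (simp add: cmod_def t_def)
  have e1: "Complex a b = mob (Complex 0 (-t)) (of_real (sg a b))"
    using corner(4)[OF ab] neg_Lp[of t "- sg a b"] by (simp add: Lp_def t_def complex_eq_iff)
  have e2: "Complex (-a) b = mob (Complex 0 (-t)) (of_real (- sg a b))"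
    using corner(3)[OF ab] neg_Lp[of t "sg a b"] by (simp add: Lp_def t_def complex_eq_iff)
  have "hmid (Complex a b) (Complex (-a) b) = mob (Complex 0 (-t)) 0"
    unfolding e1 e2 by (rule seg_hmid[OF c corner(1,2)[OF ab]])
  thus ?thesis by (simp add: mob_def t_def complex_eq_iff)
qed

definition lam0 :: "real \<Rightarrow> real \<Rightarrow> real" where
  "lam0 a b = pdist (Complex 0 (- tp a b)) (Complex 0 (tp a b))"

lemma seg_in_quad: assumes ab: "a > 0" "b > 0" "a^2 + b^2 < 1"
  shows "closed_segment (Complex 0 (- tp a b)) (Complex 0 (tp a b)) \<subseteq> quad a b"
proof -
  define t where "t = tp a b"
  define s where "s = tp b a"
  have ba: "b > 0" "a > 0" "b^2 + a^2 < 1" using ab by auto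
  have t: "0 < t" "t < 1" using tp_props[OF ab] by (auto simp: t_def)
  have s: "0 < s" using tp_props[OF ba] by (auto simp: s_def)
  have sg: "0 < sg a b" using corner[OF ab] by auto
  have mL: "Complex 0 (-t) \<in> quad_boundary a b"
  proof -
    have "Lp t 0 \<in> Lset a b" using sg by (auto simp: Lset_def t_def)
    thus ?thesis unfolding quad_boundary_eq[OF ab] Lp0 by blast
  qed
  have mU: "Complex 0 t \<in> quad_boundary a b"
  proof -
    have "Lp t 0 \<in> Lset a b" using sg by (auto simp: Lset_def t_def)
    hence "- Lp t 0 \<in> uminus ` Lset a b" by blast
    moreover have "- Lp t 0 = Complex 0 t" by (simp add: Lp0 complex_eq_iff)
    ultimately show ?thesis unfolding quad_boundary_eq[OF ab] by auto
  qed
  show ?thesis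
  proof
    fix z assume "z \<in> closed_segment (Complex 0 (- tp a b)) (Complex 0 (tp a b))"
    then obtain y where y: "y \<in> {-t..t}" "z = Complex 0 y" using seg_imag[OF t(1)] by (auto simp: t_def)
    show "z \<in> quad a b"
    proof (cases "y = t \<or> y = -t")
      case True thus ?thesis using mL mU y by (auto simp: quad_def)
    next
      case False
      hence yl: "-t < y" "y < t" using y by auto
      have "z \<in> Dq a b"
      proof -
        have "cmod z < 1" using y yl t by (simp add: cmod_def)
        moreover have "PL t z > 0"
        proof -
          have "PL t z = (y + t) * (1 + t * y)" using y by (simp add: PL_def cmod_def power2_eq_square algebra_simps)
          moreover have "1 + t * y > 0" using yl t by (smt (verit) mult_less_cancel_left1 mult_pos_pos mult_minus_right)
          ultimately show ?thesis using yl by simp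
        qed
        moreover have "PL t (-z) > 0"
        proof -
          have "PL t (-z) = (t - y) * (1 - t * y)" using y by (simp add: PL_def cmod_def power2_eq_square algebra_simps)
          moreover have "1 - t * y > 0" using yl t by (smt (verit) mult_less_cancel_left1 mult_pos_pos mult_minus_right)
          ultimately show ?thesis using yl by simp
        qed
        moreover have "PL s (- \<i> * z) > 0" "PL s (\<i> * z) > 0"
          using y s by (simp_all add: PL_def norm_mult cmod_def add_pos_nonneg)
        ultimately show ?thesis by (simp add: Dq_def t_def s_def)
      qed
      thus ?thesis using Dq_inside[OF ab] by (simp add: quad_def)
    qed
  qed
qed

lemma g0_props: assumes ab: "a > 0" "b > 0" "a^2 + b^2 < 1"
  defines "g0 \<equiv> linepath (Complex 0 (- tp a b)) (Complex 0 (tp a b))"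
  shows "LU_path a b g0" "hlength g0 = ereal (lam0 a b)"
proof -
  define t where "t = tp a b"
  have t: "0 < t" "t < 1" using tp_props[OF ab] by (auto simp: t_def)
  have sg: "0 < sg a b" using corner[OF ab] by auto
  have mL: "Complex 0 (-t) \<in> lower_side a b"
    using sg unfolding lower_eq[OF ab] by (auto simp: Lset_def t_def Lp0[symmetric])
  have mU: "Complex 0 t \<in> upper_side a b"
  proof -
    have "Lp t 0 \<in> Lset a b" using sg by (auto simp: Lset_def t_def)
    hence "- Lp t 0 \<in> uminus ` Lset a b" by blast
    moreover have "- Lp t 0 = Complex 0 t" by (simp add: Lp0 complex_eq_iff)
    ultimately show ?thesis unfolding upper_eq[OF ab] by auto
  qed
  show "LU_path a b g0"
    unfolding LU_path_def g0_def using seg_in_quad[OF ab] mL mU by (simp add: t_def)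
  define \<Phi> where "\<Phi> = (\<lambda>s. H ((1 - s) * (-t) + s * t))"
  have gs: "\<And>s. g0 s = Complex 0 ((1 - s) * (-t) + s * t)"
    by (simp add: g0_def linepath_def t_def complex_eq_iff)
  have yb: "\<And>s. s \<in> {0..1} \<Longrightarrow> \<bar>(1 - s) * (-t) + s * t\<bar> < 1"
  proof -
    fix s :: real assume "s \<in> {0..1}"
    hence "\<bar>(1 - s) * (-t) + s * t\<bar> \<le> t" using t by (simp add: abs_le_iff algebra_simps)
    thus "\<bar>(1 - s) * (-t) + s * t\<bar> < 1" using t by simp
  qed
  have mono: "\<And>x y. x \<in> {0..1} \<Longrightarrow> y \<in> {0..1} \<Longrightarrow> x \<le> y \<Longrightarrow> \<Phi> x \<le> \<Phi> y"
  proof -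
    fix x y :: real assume xy: "x \<in> {0..1}" "y \<in> {0..1}" "x \<le> y"
    have "(1 - x) * (-t) + x * t \<le> (1 - y) * (-t) + y * t" using xy t by (simp add: algebra_simps mult_right_mono)
    thus "\<Phi> x \<le> \<Phi> y" unfolding \<Phi>_def using H_le_iff[OF yb[OF xy(1)] yb[OF xy(2)]] by simp
  qed
  have P: "\<forall>x\<in>{0..1}. \<forall>y\<in>{0..1}. x \<le> y \<longrightarrow> pdist (g0 x) (g0 y) = \<Phi> y - \<Phi> x"
  proof (intro ballI impI)
    fix x y :: real assume xy: "x \<in> {0..1}" "y \<in> {0..1}" "x \<le> y"
    have "pdist (g0 x) (g0 y) = \<bar>\<Phi> x - \<Phi> y\<bar>" unfolding gs \<Phi>_def using yb xy by (simp add: pdist_imag)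
    thus "pdist (g0 x) (g0 y) = \<Phi> y - \<Phi> x" using mono[OF xy] by simp
  qed
  have l01: "lam0 a b = \<Phi> 1 - \<Phi> 0"
  proof -
    have "lam0 a b = \<bar>H (-t) - H t\<bar>" unfolding lam0_def t_def[symmetric] using t by (simp add: pdist_imag)
    moreover have "H (-t) \<le> H t" using H_le_iff[of "-t" t] t by simp
    ultimately show ?thesis by (simp add: \<Phi>_def)
  qed
  have "hlength g0 \<le> ereal (lam0 a b)"
    unfolding hlength_def
  proof (rule SUP_least)
    fix ts :: "real list" assume ts: "ts \<in> {ts. sorted ts \<and> set ts \<subseteq> {0..1}}"
    show "ereal (sum_list (map2 (\<lambda>s t. pdist (g0 s) (g0 t)) ts (tl ts))) \<le> ereal (lam0 a b)"
    proof (cases "ts = []")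
      case True
      have "lam0 a b \<ge> 0" using l01 mono[of 0 1] by simp
      thus ?thesis using True by simp
    next
      case False
      have "sum_list (map2 (\<lambda>s t. pdist (g0 s) (g0 t)) ts (tl ts)) = \<Phi> (last ts) - \<Phi> (hd ts)"
        by (rule tele[OF _ _ P False]) (use ts in auto)
      moreover have "hd ts \<in> {0..1}" "last ts \<in> {0..1}" using ts False hd_in_set[OF False] last_in_set[OF False] by blast+
      hence "\<Phi> 0 \<le> \<Phi> (hd ts)" "\<Phi> (last ts) \<le> \<Phi> 1" using mono by auto
      ultimately show ?thesis using l01 by simp
    qed
  qed
  moreover have "ereal (lam0 a b) \<le> hlength g0"
    using hl_2[of g0] by (simp add: g0_def lam0_def linepath_0' linepath_1')
  ultimately show "hlength g0 = ereal (lam0 a b)" by simp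
qed

lemma LU_lower: assumes ab: "a > 0" "b > 0" "a^2 + b^2 < 1" and g: "LU_path a b g"
  shows "ereal (lam0 a b) \<le> hlength g"
proof -
  have "g 0 \<in> Lset a b" "g 1 \<in> uminus ` Lset a b"
    using g unfolding LU_path_def lower_eq[OF ab] upper_eq[OF ab] pathstart_def pathfinish_def by auto
  hence "lam0 a b \<le> pdist (g 0) (g 1)" using LU_dist(1)[OF ab] by (simp add: lam0_def)
  thus ?thesis using hl_2[of g] by (meson ereal_less_eq(3) order_trans)
qed



lemma LU_unique: assumes ab: "a > 0" "b > 0" "a^2 + b^2 < 1" and g: "LU_path a b g"
  and le: "hlength g \<le> ereal (lam0 a b)"
  shows "path_image g = closed_segment (Complex 0 (- tp a b)) (Complex 0 (tp a b))"
proof -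
  define t where "t = tp a b"
  have t: "0 < t" "t < 1" using tp_props[OF ab] by (auto simp: t_def)
  have g01: "g 0 \<in> Lset a b" "g 1 \<in> uminus ` Lset a b"
    using g unfolding LU_path_def lower_eq[OF ab] upper_eq[OF ab] pathstart_def pathfinish_def by auto
  have "ereal (pdist (g 0) (g 1)) \<le> ereal (lam0 a b)" using hl_2[of g] le by (rule order_trans)
  hence "pdist (g 0) (g 1) \<le> pdist (Complex 0 (- tp a b)) (Complex 0 (tp a b))" by (simp add: lam0_def)
  hence ends: "g 0 = Complex 0 (-t)" "g 1 = Complex 0 t" using LU_dist(2)[OF ab g01] by (auto simp: t_def)
  have pg: "path g" "path_image g \<subseteq> quad a b" using g by (auto simp: LU_path_def)
  have sub: "path_image g \<subseteq> (\<lambda>y. Complex 0 y) ` {-t..t}"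
  proof
    fix z assume "z \<in> path_image g"
    then obtain s where s: "s \<in> {0..1}" "z = g s" by (auto simp: path_image_def)
    have zc: "cmod z < 1" using pg(2) quad_disc \<open>z \<in> path_image g\<close> by (auto simp: pdisc_def)
    have "ereal (pdist (g 0) (g s) + pdist (g s) (g 1)) \<le> ereal (lam0 a b)" using hl_3[OF s(1), of g] le by (rule order_trans)
    hence "pdist (Complex 0 (-t)) z + pdist z (Complex 0 t) \<le> pdist (Complex 0 (-t)) (Complex 0 t)"
      using ends s by (simp add: lam0_def t_def)
    hence "Re z = 0 \<and> -t \<le> Im z \<and> Im z \<le> t" using axis_between[OF t zc] by simp
    thus "z \<in> (\<lambda>y. Complex 0 y) ` {-t..t}" by (auto simp: image_iff complex_eq_iff intro!: bexI[of _ "Im z"])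
  qed
  have "(\<lambda>y. Complex 0 y) ` {-t..t} \<subseteq> path_image g"
  proof
    fix w assume "w \<in> (\<lambda>y. Complex 0 y) ` {-t..t}"
    then obtain y where y: "y \<in> {-t..t}" "w = Complex 0 y" by blast
    have "connected (Im ` path_image g)"
      by (intro connected_continuous_image connected_path_image pg(1) continuous_intros)
    moreover have "-t \<in> Im ` path_image g" "t \<in> Im ` path_image g"
    proof -
      have "Complex 0 (-t) \<in> path_image g" "Complex 0 t \<in> path_image g"
        using ends pathstart_in_path_image[of g] pathfinish_in_path_image[of g] by (auto simp: pathstart_def pathfinish_def)
      thus "-t \<in> Im ` path_image g" "t \<in> Im ` path_image g"
        by (metis complex.sel(2) image_eqI)+
    qed
    ultimately have "{-t..t} \<subseteq> Im ` path_image g" by (rule connected_contains_Icc)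
    then obtain z where z: "z \<in> path_image g" "Im z = y" using y by blast
    have "Re z = 0" using sub z(1) by auto
    thus "w \<in> path_image g" using z y by (metis complex_surj)
  qed
  thus ?thesis using sub seg_imag[OF t(1)] by (simp add: t_def)
qed

lemma pdist_cont: "continuous_on (pdisc \<times> pdisc) (\<lambda>p. pdist (fst p) (snd p))"
  unfolding pdist_def
proof (rule continuous_on_compose2[OF continuous_on_arcosh[of "{1..}"]])
  have nz: "\<And>p. p \<in> pdisc \<times> pdisc \<Longrightarrow> (1 - (cmod (fst p))^2) * (1 - (cmod (snd p))^2) \<noteq> 0"
  proof -
    fix p :: "complex \<times> complex" assume "p \<in> pdisc \<times> pdisc"
    hence "cmod (fst p) < 1" "cmod (snd p) < 1" by (auto simp: pdisc_def)
    hence "(cmod (fst p))^2 < 1" "(cmod (snd p))^2 < 1" by (simp_all add: abs_square_less_1)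
    thus "(1 - (cmod (fst p))^2) * (1 - (cmod (snd p))^2) \<noteq> 0" by simp
  qed
  show "continuous_on (pdisc \<times> pdisc) (\<lambda>p. 1 + pp (fst p) (snd p))"
    unfolding pp_def by (intro continuous_intros) (use nz in auto)
  show "(\<lambda>p. 1 + pp (fst p) (snd p)) ` (pdisc \<times> pdisc) \<subseteq> {1..}"
    using pp_nonneg by (auto simp: pdisc_def)
qed simp

lemma partii: assumes ab: "a > 0" "b > 0" "a^2 + b^2 < 1"
  shows "\<exists>alpha > 0. \<forall>g. LU_path a b g \<and> path_image g \<inter> (left_side a b \<union> right_side a b) \<noteq> {}
            \<longrightarrow> hlength g \<ge> ereal (lam0 a b + alpha)"
proof -
  have ba: "b > 0" "a > 0" "b^2 + a^2 < 1" using ab by auto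
  define t where "t = tp a b"
  have t: "0 < t" "t < 1" using tp_props[OF ab] by (auto simp: t_def)
  have s: "0 < tp b a" using tp_props[OF ba] by auto
  define L where "L = Lset a b"
  define U where "U = uminus ` Lset a b"
  define M where "M = (\<lambda>z. \<i> * z) ` Lset b a \<union> (\<lambda>z. - \<i> * z) ` Lset b a"
  define K where "K = L \<times> M \<times> U"
  define F where "F = (\<lambda>p::complex \<times> complex \<times> complex. pdist (fst p) (fst (snd p)) + pdist (fst (snd p)) (snd (snd p)))"
  have cL: "compact L" using Lset_compact[OF ab] by (simp add: L_def)
  have cU: "compact U" using compact_negations[OF Lset_compact[OF ab]] by (simp add: U_def)
  have cM: "compact M"
    unfolding M_def using Lset_compact[OF ba]
    by (intro compact_Un compact_continuous_image continuous_intros)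
  have cK: "compact K" unfolding K_def using cL cM cU by (intro compact_Times)
  have dL: "L \<subseteq> pdisc" using Lset_disc[OF ab] by (simp add: L_def)
  have dU: "U \<subseteq> pdisc" using Lset_disc[OF ab] by (auto simp: U_def pdisc_def)
  have dM: "M \<subseteq> pdisc" using Lset_disc[OF ba] by (auto simp: M_def pdisc_def norm_mult)
  have ne: "Lset a b \<noteq> {}" "Lset b a \<noteq> {}" using corner[OF ab] corner[OF ba] by (auto simp: Lset_def)
  have Kne: "K \<noteq> {}" using ne by (auto simp: K_def L_def M_def U_def)
  have cF: "continuous_on K F"
  proof -
    have i1: "(\<lambda>p. (fst p, fst (snd p))) ` K \<subseteq> pdisc \<times> pdisc" using dL dM by (auto simp: K_def)
    have i2: "(\<lambda>p. (fst (snd p), snd (snd p))) ` K \<subseteq> pdisc \<times> pdisc" using dM dU by (auto simp: K_def)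
    have k1: "continuous_on K (\<lambda>p::complex \<times> complex \<times> complex. (fst p, fst (snd p)))" by (intro continuous_intros)
    have k2: "continuous_on K (\<lambda>p::complex \<times> complex \<times> complex. (fst (snd p), snd (snd p)))" by (intro continuous_intros)
    have c1: "continuous_on K (\<lambda>p. pdist (fst p) (fst (snd p)))"
      using continuous_on_compose2[OF pdist_cont k1 i1] by simp
    have c2: "continuous_on K (\<lambda>p. pdist (fst (snd p)) (snd (snd p)))"
      using continuous_on_compose2[OF pdist_cont k2 i2] by simp
    show ?thesis unfolding F_def using c1 c2 by (intro continuous_intros)
  qed
  obtain m where m: "m \<in> K" "\<And>k. k \<in> K \<Longrightarrow> F m \<le> F k"
    using continuous_attains_inf[OF cK Kne cF] by blast
  define alpha where "alpha = F m - lam0 a b"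
  have "alpha > 0"
  proof (rule ccontr)
    assume "\<not> alpha > 0"
    hence Fle: "F m \<le> lam0 a b" by (simp add: alpha_def)
    obtain x z y where xzy: "m = (x, z, y)" "x \<in> L" "z \<in> M" "y \<in> U" using m(1) by (auto simp: K_def)
    have disc: "cmod x < 1" "cmod z < 1" "cmod y < 1" using xzy dL dM dU by (auto simp: pdisc_def)
    have "pdist x y \<le> pdist x z + pdist z y" using pdist_triangle disc by blast
    also have "\<dots> \<le> lam0 a b" using Fle xzy by (simp add: F_def)
    finally have "pdist x y \<le> lam0 a b" .
    hence ends: "x = Complex 0 (-t)" "y = Complex 0 t"
      using LU_dist(2)[OF ab, of x y] xzy by (auto simp: L_def U_def lam0_def t_def)
    have "pdist (Complex 0 (-t)) z + pdist z (Complex 0 t) \<le> pdist (Complex 0 (-t)) (Complex 0 t)"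
      using Fle xzy ends by (simp add: F_def lam0_def t_def)
    hence "Re z = 0" using axis_between[OF t disc(2)] by simp
    moreover have "Re z \<noteq> 0"
    proof -
      from xzy(3) consider w where "w \<in> Lset b a" "z = \<i> * w" | w where "w \<in> Lset b a" "z = - \<i> * w"
        unfolding M_def by blast
      thus ?thesis
      proof cases
        case 1
        then obtain u where "w = Lp (tp b a) u" by (auto simp: Lset_def)
        hence "Im w < 0" using Lp_Im[OF s] by simp
        thus ?thesis using 1 by simp
      next
        case 2
        then obtain u where "w = Lp (tp b a) u" by (auto simp: Lset_def)
        hence "Im w < 0" using Lp_Im[OF s] by simp
        thus ?thesis using 2 by simp
      qed
    qed
    ultimately show False by simp
  qed
  moreover have "\<forall>g. LU_path a b g \<and> path_image g \<inter> (left_side a b \<union> right_side a b) \<noteq> {}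
            \<longrightarrow> hlength g \<ge> ereal (lam0 a b + alpha)"
  proof (intro allI impI)
    fix g assume g: "LU_path a b g \<and> path_image g \<inter> (left_side a b \<union> right_side a b) \<noteq> {}"
    then obtain z where z: "z \<in> path_image g" "z \<in> left_side a b \<union> right_side a b" by blast
    then obtain s where s: "s \<in> {0..1}" "z = g s" by (auto simp: path_image_def)
    have "g 0 \<in> L" "g 1 \<in> U"
      using g unfolding LU_path_def lower_eq[OF ab] upper_eq[OF ab] pathstart_def pathfinish_def L_def U_def by auto
    moreover have "g s \<in> M" using z s unfolding M_def left_eq[OF ab] right_eq[OF ab] by auto
    ultimately have "(g 0, g s, g 1) \<in> K" by (simp add: K_def)
    hence "F m \<le> F (g 0, g s, g 1)" by (rule m(2))
    hence "lam0 a b + alpha \<le> pdist (g 0) (g s) + pdist (g s) (g 1)" by (simp add: alpha_def F_def)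
    thus "hlength g \<ge> ereal (lam0 a b + alpha)" using hl_3[OF s(1), of g] by (meson ereal_less_eq(3) order_trans)
  qed
  ultimately show ?thesis by blast
qed

theorem lemmaL1:
  fixes lam eps a b :: real
  assumes "lam > 0" and "eps > 0"
    and "a > 0" and "b > 0" and "a\<^sup>2 + b\<^sup>2 < 1"
    and "pdist (hmid (Complex a b) (Complex (-a) b))
               (hmid (Complex a (-b)) (Complex (-a) (-b))) = lam"
    and "pdist (hmid (Complex (-a) (-b)) (Complex (-a) b))
               (hmid (Complex a (-b)) (Complex a b)) = eps"
  shows "(\<exists>g0. LU_path a b g0
            \<and> (\<exists>y1 y2. path_image g0 = closed_segment (Complex 0 y1) (Complex 0 y2))
            \<and> (\<forall>g. LU_path a b g \<longrightarrow> hlength g0 \<le> hlength g)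
            \<and> (\<forall>g. LU_path a b g \<and> (\<forall>h. LU_path a b h \<longrightarrow> hlength g \<le> hlength h)
                   \<longrightarrow> path_image g = path_image g0))
       \<and> (\<exists>alpha > 0. \<forall>g. LU_path a b g
            \<and> path_image g \<inter> (left_side a b \<union> right_side a b) \<noteq> {}
            \<longrightarrow> hlength g \<ge> ereal (lam + alpha))"
proof -
  have ab: "a > 0" "b > 0" "a^2 + b^2 < 1" using assms by auto
  have lam: "lam = lam0 a b"
    using assms(6) unfolding upper_hmid[OF ab] lower_hmid[OF ab] lam0_def by (simp add: pdist_sym)
  define g0 where "g0 = linepath (Complex 0 (- tp a b)) (Complex 0 (tp a b))"
  have g0: "LU_path a b g0" "hlength g0 = ereal (lam0 a b)" using g0_props[OF ab] by (simp_all add: g0_def)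
  have img: "path_image g0 = closed_segment (Complex 0 (- tp a b)) (Complex 0 (tp a b))"
    by (simp add: g0_def)
  have "LU_path a b g0
            \<and> (\<exists>y1 y2. path_image g0 = closed_segment (Complex 0 y1) (Complex 0 y2))
            \<and> (\<forall>g. LU_path a b g \<longrightarrow> hlength g0 \<le> hlength g)
            \<and> (\<forall>g. LU_path a b g \<and> (\<forall>h. LU_path a b h \<longrightarrow> hlength g \<le> hlength h)
                   \<longrightarrow> path_image g = path_image g0)"
  proof (intro conjI allI impI)
    show "LU_path a b g0" by (rule g0(1))
    show "\<exists>y1 y2. path_image g0 = closed_segment (Complex 0 y1) (Complex 0 y2)" using img by blast
    fix g
    { assume "LU_path a b g"
      thus "hlength g0 \<le> hlength g" using LU_lower[OF ab] g0(2) by simp }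
    { assume h: "LU_path a b g \<and> (\<forall>h. LU_path a b h \<longrightarrow> hlength g \<le> hlength h)"
      hence "hlength g \<le> ereal (lam0 a b)" using g0 by metis
      thus "path_image g = path_image g0" using LU_unique[OF ab] h img by simp }
  qed
  moreover have "\<exists>alpha > 0. \<forall>g. LU_path a b g
            \<and> path_image g \<inter> (left_side a b \<union> right_side a b) \<noteq> {}
            \<longrightarrow> hlength g \<ge> ereal (lam + alpha)"
    using partii[OF ab] lam by simp
  ultimately show ?thesis by blast
qed


end
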